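(* For all integers $a$ and $\ell$ with $3\le a\le\ell$ there is a connected graph $F$ with $v(F)=\ell$ and $\mathrm{tw}(F)=a-1$ such that $D_{\mathrm{tw}}(F)\le a$. Specifically, $D_{\mathrm{tw}}(L_{a,b})=W_\kappa(L_{a,b})=a$ for all $a\ge3$ and $b\ge0$.
   Context: Graphs are finite simple graphs; $v(F)$ is the number of vertices and $\mathrm{tw}(F)$ the treewidth. A graph is $k$-connected if it has more than $k$ vertices, is connected, and remains connected after removal of any $k-1$ vertices; the connectivity $\kappa(G)$ is the maximum $k$ such that $G$ is $k$-connected. We use first-order logic of graphs with relation symbols for adjacency and equality only; the variable width of a sentence is the number of distinct variables it uses. For a graph parameter $\pi$, $D_\pi(F)$ (resp. $W_\pi(F)$) is the minimum quantifier depth (resp. variable width) of a first-order sentence $\Phi$ for which there is an integer $k$ such that for every connected graph $G$ with $\pi(G)\ge k$, $G\models\Phi$ if and only if $G$ contains a (not necessarily induced) subgraph isomorphic to $F$. For $a\ge3$, $b\ge1$, the lollipop graph $L_{a,b}$ is obtained from the complete graph $K_a$ and the path $P_b$ on $b$ vertices by adding an edge between an end vertex of $P_b$ and a vertex of $K_a$; by convention $L_{a,0}=K_a$. *)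

theory Defs
  imports Main
begin

type_synonym graph = "nat set \<times> (nat \<times> nat) set"

abbreviation verts :: "graph \<Rightarrow> nat set" where "verts G \<equiv> fst G"
abbreviation edges :: "graph \<Rightarrow> (nat \<times> nat) set" where "edges G \<equiv> snd G"

definition wf_graph :: "graph \<Rightarrow> bool" where
  "wf_graph G \<longleftrightarrow> finite (verts G) \<and> edges G \<subseteq> verts G \<times> verts G
     \<and> (\<forall>u v. (u, v) \<in> edges G \<longrightarrow> (v, u) \<in> edges G)
     \<and> (\<forall>v. (v, v) \<notin> edges G)"

definition induced :: "graph \<Rightarrow> nat set \<Rightarrow> graph" where
  "induced G S = (verts G \<inter> S, edges G \<inter> ((verts G \<inter> S) \<times> (verts G \<inter> S)))"

definition connected_graph :: "graph \<Rightarrow> bool" where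
  "connected_graph G \<longleftrightarrow> verts G \<noteq> {} \<and>
     (\<forall>u\<in>verts G. \<forall>v\<in>verts G. (u, v) \<in> (edges G)\<^sup>*)"

definition contains_subgraph :: "graph \<Rightarrow> graph \<Rightarrow> bool" where
  "contains_subgraph G F \<longleftrightarrow> (\<exists>f. inj_on f (verts F) \<and> f ` verts F \<subseteq> verts G \<and>
     (\<forall>u v. (u, v) \<in> edges F \<longrightarrow> (f u, f v) \<in> edges G))"

definition k_connected :: "graph \<Rightarrow> nat \<Rightarrow> bool" where
  "k_connected G k \<longleftrightarrow> card (verts G) > k \<and> connected_graph G \<and>
     (\<forall>S. S \<subseteq> verts G \<and> card S < k \<longrightarrow> connected_graph (induced G (verts G - S)))"

definition kappa :: "graph \<Rightarrow> nat" where
  "kappa G = (GREATEST k. k_connected G k)"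

definition has_cycle :: "graph \<Rightarrow> bool" where
  "has_cycle G \<longleftrightarrow> (\<exists>vs. length vs \<ge> 3 \<and> distinct vs \<and> set vs \<subseteq> verts G \<and>
     (\<forall>i. i + 1 < length vs \<longrightarrow> (vs ! i, vs ! (i + 1)) \<in> edges G) \<and>
     (last vs, hd vs) \<in> edges G)"

definition is_tree :: "graph \<Rightarrow> bool" where
  "is_tree T \<longleftrightarrow> wf_graph T \<and> connected_graph T \<and> \<not> has_cycle T"

definition tree_decomposition :: "graph \<Rightarrow> graph \<Rightarrow> (nat \<Rightarrow> nat set) \<Rightarrow> bool" where
  "tree_decomposition G T X \<longleftrightarrow> is_tree T \<and>
     (\<forall>i\<in>verts T. X i \<subseteq> verts G) \<and>
     (\<forall>v\<in>verts G. \<exists>i\<in>verts T. v \<in> X i) \<and>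
     (\<forall>u v. (u, v) \<in> edges G \<longrightarrow> (\<exists>i\<in>verts T. u \<in> X i \<and> v \<in> X i)) \<and>
     (\<forall>v\<in>verts G. connected_graph (induced T {i \<in> verts T. v \<in> X i}))"

definition td_width :: "graph \<Rightarrow> (nat \<Rightarrow> nat set) \<Rightarrow> nat" where
  "td_width T X = Max ((\<lambda>i. card (X i)) ` verts T) - 1"

definition treewidth :: "graph \<Rightarrow> nat" where
  "treewidth G = (LEAST w. \<exists>T X. tree_decomposition G T X \<and> td_width T X = w)"

datatype fo = Adj nat nat | Eq nat nat | Neg fo | Conj fo fo | Disj fo fo
  | Ex nat fo | All nat fo

fun sat :: "graph \<Rightarrow> (nat \<Rightarrow> nat) \<Rightarrow> fo \<Rightarrow> bool" where
  "sat G s (Adj x y) = ((s x, s y) \<in> edges G)"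
| "sat G s (Eq x y) = (s x = s y)"
| "sat G s (Neg \<phi>) = (\<not> sat G s \<phi>)"
| "sat G s (Conj \<phi> \<psi>) = (sat G s \<phi> \<and> sat G s \<psi>)"
| "sat G s (Disj \<phi> \<psi>) = (sat G s \<phi> \<or> sat G s \<psi>)"
| "sat G s (Ex x \<phi>) = (\<exists>v\<in>verts G. sat G (s(x := v)) \<phi>)"
| "sat G s (All x \<phi>) = (\<forall>v\<in>verts G. sat G (s(x := v)) \<phi>)"

fun free_vars :: "fo \<Rightarrow> nat set" where
  "free_vars (Adj x y) = {x, y}"
| "free_vars (Eq x y) = {x, y}"
| "free_vars (Neg \<phi>) = free_vars \<phi>"
| "free_vars (Conj \<phi> \<psi>) = free_vars \<phi> \<union> free_vars \<psi>"
| "free_vars (Disj \<phi> \<psi>) = free_vars \<phi> \<union> free_vars \<psi>"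
| "free_vars (Ex x \<phi>) = free_vars \<phi> - {x}"
| "free_vars (All x \<phi>) = free_vars \<phi> - {x}"

fun all_vars :: "fo \<Rightarrow> nat set" where
  "all_vars (Adj x y) = {x, y}"
| "all_vars (Eq x y) = {x, y}"
| "all_vars (Neg \<phi>) = all_vars \<phi>"
| "all_vars (Conj \<phi> \<psi>) = all_vars \<phi> \<union> all_vars \<psi>"
| "all_vars (Disj \<phi> \<psi>) = all_vars \<phi> \<union> all_vars \<psi>"
| "all_vars (Ex x \<phi>) = insert x (all_vars \<phi>)"
| "all_vars (All x \<phi>) = insert x (all_vars \<phi>)"

fun qdepth :: "fo \<Rightarrow> nat" where
  "qdepth (Adj x y) = 0"
| "qdepth (Eq x y) = 0"
| "qdepth (Neg \<phi>) = qdepth \<phi>"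
| "qdepth (Conj \<phi> \<psi>) = max (qdepth \<phi>) (qdepth \<psi>)"
| "qdepth (Disj \<phi> \<psi>) = max (qdepth \<phi>) (qdepth \<psi>)"
| "qdepth (Ex x \<phi>) = Suc (qdepth \<phi>)"
| "qdepth (All x \<phi>) = Suc (qdepth \<phi>)"

definition var_width :: "fo \<Rightarrow> nat" where
  "var_width \<phi> = card (all_vars \<phi>)"

definition sentence :: "fo \<Rightarrow> bool" where
  "sentence \<phi> \<longleftrightarrow> free_vars \<phi> = {}"

definition models :: "graph \<Rightarrow> fo \<Rightarrow> bool" where
  "models G \<phi> \<longleftrightarrow> (\<forall>s. sat G s \<phi>)"

definition defines_subgraph :: "(graph \<Rightarrow> nat) \<Rightarrow> graph \<Rightarrow> fo \<Rightarrow> bool" where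
  "defines_subgraph \<pi> F \<Phi> \<longleftrightarrow> sentence \<Phi> \<and> (\<exists>k. \<forall>G. wf_graph G \<and> connected_graph G \<and> \<pi> G \<ge> k
       \<longrightarrow> (models G \<Phi> \<longleftrightarrow> contains_subgraph G F))"

definition D_par :: "(graph \<Rightarrow> nat) \<Rightarrow> graph \<Rightarrow> nat" where
  "D_par \<pi> F = (LEAST d. \<exists>\<Phi>. defines_subgraph \<pi> F \<Phi> \<and> qdepth \<Phi> = d)"

definition W_par :: "(graph \<Rightarrow> nat) \<Rightarrow> graph \<Rightarrow> nat" where
  "W_par \<pi> F = (LEAST w. \<exists>\<Phi>. defines_subgraph \<pi> F \<Phi> \<and> var_width \<Phi> = w)"

text \<open>L a b: clique on 0..a-1, path on a..a+b-1, edge between a-1 and a (if b \<ge> 1).\<close>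
definition lollipop :: "nat \<Rightarrow> nat \<Rightarrow> graph" where
  "lollipop a b = ({0..<a+b},
     {(i, j). i < a + b \<and> j < a + b \<and>
        ((i < a \<and> j < a \<and> i \<noteq> j) \<or> (min i j \<ge> a - 1 \<and> (i = j + 1 \<or> j = i + 1)))})"

end

theory Submission
  imports Defs
begin


lemma rtr_sym:
  assumes "\<And>x y. (x,y)\<in>R \<Longrightarrow> (y,x)\<in>R" and "(x,y)\<in>R\<^sup>*"
  shows "(y,x)\<in>R\<^sup>*"
  using assms(2)
proof (induction rule: rtrancl_induct)
  case base then show ?case by simp
next
  case (step y z)
  then show ?case using assms(1) by (meson converse_rtrancl_into_rtrancl)
qed

lemma no_cycle_rank:
  assumes E: "\<And>x y. (x,y) \<in> E \<Longrightarrow> (x = par y \<and> (dep x::nat) < dep y) \<or> (y = par x \<and> dep y < dep x)"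
  shows "\<not> has_cycle (V,E)"
proof
  assume "has_cycle (V,E)"
  then obtain vs where n3: "length vs \<ge> 3" and dis: "distinct vs"
    and cons: "\<And>i. i + 1 < length vs \<Longrightarrow> (vs ! i, vs ! (i + 1)) \<in> E"
    and cl: "(last vs, hd vs) \<in> E"
    unfolding has_cycle_def by auto
  define n where "n = length vs"
  have "\<exists>p. p < n \<and> (\<forall>q<n. dep (vs!q) \<le> dep (vs!p))"
  proof -
    have "finite ((\<lambda>q. dep (vs!q)) ` {..<n})" by simp
    moreover have "(\<lambda>q. dep (vs!q)) ` {..<n} \<noteq> {}" using n3 n_def by (auto simp: lessThan_empty_iff)
    ultimately have "Max ((\<lambda>q. dep (vs!q)) ` {..<n}) \<in> (\<lambda>q. dep (vs!q)) ` {..<n}"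
      using Max_in by blast
    then obtain p where p: "p < n" "dep (vs!p) = Max ((\<lambda>q. dep (vs!q)) ` {..<n})" by auto
    then show ?thesis by (metis Max_ge \<open>finite _\<close> image_eqI lessThan_iff)
  qed
  then obtain p where p: "p < n" and mx: "\<And>q. q < n \<Longrightarrow> dep (vs!q) \<le> dep (vs!p)" by auto
  have lastv: "last vs = vs ! (n-1)" and hdv: "hd vs = vs ! 0" proof -
    have "vs \<noteq> []" using n3 by auto
    then show "last vs = vs ! (n-1)" "hd vs = vs ! 0" by (simp_all add: n_def last_conv_nth hd_conv_nth)
  qed
  have adj: "\<And>q. q < n \<Longrightarrow> ((vs!p, vs!q) \<in> E \<or> (vs!q, vs!p) \<in> E) \<Longrightarrow> vs!q = par (vs!p)"
    using E mx by (metis leD)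
  define nx where "nx = (if p + 1 < n then p + 1 else 0)"
  define pv where "pv = (if p > 0 then p - 1 else n - 1)"
  have nx: "nx < n" "(vs!p, vs!nx) \<in> E"
  proof -
    show "nx < n" using p n_def n3 unfolding nx_def by auto
    show "(vs!p, vs!nx) \<in> E"
    proof (cases "p + 1 < n")
      case True then show ?thesis using cons n_def unfolding nx_def by auto
    next
      case False then have "p = n - 1" using p by auto
      then show ?thesis using False cl lastv hdv unfolding nx_def by auto
    qed
  qed
  have pv: "pv < n" "(vs!pv, vs!p) \<in> E"
  proof -
    show "pv < n" using p n_def n3 unfolding pv_def by auto
    show "(vs!pv, vs!p) \<in> E"
    proof (cases "p > 0")
      case True then have "pv + 1 = p" unfolding pv_def by auto
      then show ?thesis using cons n_def p by (metis)
    next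
      case False then show ?thesis using cl lastv hdv unfolding pv_def by auto
    qed
  qed
  have "nx \<noteq> pv" using p n3 n_def unfolding nx_def pv_def by auto
  moreover have "vs!nx = vs!pv" using adj nx pv by metis
  ultimately show False using dis nx(1) pv(1) n_def by (simp add: nth_eq_iff_index_eq)
qed

definition rtree :: "nat set \<Rightarrow> nat \<Rightarrow> (nat \<Rightarrow> nat) \<Rightarrow> graph" where
  "rtree VT r par = (VT, {(i, par i) | i. i \<in> VT - {r}} \<union> {(par i, i) | i. i \<in> VT - {r}})"

lemma rtree_reach_root:
  assumes P: "\<And>i. i \<in> VT - {r} \<Longrightarrow> par i \<in> VT \<and> (dep::nat\<Rightarrow>nat) (par i) < dep i"
    and B: "\<And>i. i \<in> B \<Longrightarrow> i \<noteq> t \<Longrightarrow> i \<in> VT - {r} \<and> par i \<in> B"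
    and i: "i \<in> B"
  shows "(i, t) \<in> (snd (rtree VT r par) \<inter> B \<times> B)\<^sup>*"
  using i
proof (induction "dep i" arbitrary: i rule: less_induct)
  case less
  show ?case
  proof (cases "i = t")
    case True then show ?thesis by simp
  next
    case False
    then have h: "i \<in> VT - {r}" "par i \<in> B" using B less.prems by auto
    have "dep (par i) < dep i" using P h by auto
    then have "(par i, t) \<in> (snd (rtree VT r par) \<inter> B \<times> B)\<^sup>*" using less h by auto
    moreover have "(i, par i) \<in> snd (rtree VT r par) \<inter> B \<times> B"
      using h less.prems unfolding rtree_def by auto
    ultimately show ?thesis by (meson converse_rtrancl_into_rtrancl)
  qed
qed

lemma rtree_sym: "(x,y) \<in> snd (rtree VT r par) \<inter> B \<times> B \<Longrightarrow> (y,x) \<in> snd (rtree VT r par) \<inter> B \<times> B"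
  unfolding rtree_def by auto

lemma rtree_is_tree:
  assumes fin: "finite VT" and r: "r \<in> VT"
    and P: "\<And>i. i \<in> VT - {r} \<Longrightarrow> par i \<in> VT \<and> (dep::nat\<Rightarrow>nat) (par i) < dep i"
  shows "is_tree (rtree VT r par)"
proof -
  have wf: "wf_graph (rtree VT r par)"
    unfolding wf_graph_def rtree_def using fin P r by auto (metis less_irrefl)+
  have reach: "(i, r) \<in> (snd (rtree VT r par) \<inter> VT \<times> VT)\<^sup>*" if "i \<in> VT" for i
    by (rule rtree_reach_root[OF P]) (use P that in auto)
  have "connected_graph (rtree VT r par)"
    unfolding connected_graph_def
  proof (intro conjI ballI)
    show "verts (rtree VT r par) \<noteq> {}" using r by (auto simp add: rtree_def)
    fix u v assume "u \<in> verts (rtree VT r par)" "v \<in> verts (rtree VT r par)"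
    then have "u \<in> VT" "v \<in> VT" by (auto simp: rtree_def)
    then have 1: "(u, r) \<in> (snd (rtree VT r par) \<inter> VT \<times> VT)\<^sup>*" and
      2: "(r, v) \<in> (snd (rtree VT r par) \<inter> VT \<times> VT)\<^sup>*"
      using reach rtr_sym[OF rtree_sym] by blast+
    have "(u, v) \<in> (snd (rtree VT r par) \<inter> VT \<times> VT)\<^sup>*" using 1 2 by simp
    then have "(u, v) \<in> (snd (rtree VT r par))\<^sup>*" using rtrancl_mono[of "snd (rtree VT r par) \<inter> VT \<times> VT"] by blast
    then show "(u, v) \<in> (edges (rtree VT r par))\<^sup>*" by simp
  qed
  moreover have "\<not> has_cycle (rtree VT r par)"
  proof -
    have "\<And>x y. (x,y) \<in> snd (rtree VT r par) \<Longrightarrow> (x = par y \<and> dep x < dep y) \<or> (y = par x \<and> dep y < dep x)"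
      using P unfolding rtree_def by auto
    then show ?thesis using no_cycle_rank[of "snd (rtree VT r par)" par dep "fst (rtree VT r par)"] by simp
  qed
  ultimately show ?thesis using wf unfolding is_tree_def by simp
qed

lemma rooted_td:
  assumes fin: "finite VT" and r: "r \<in> VT"
    and P: "\<And>i. i \<in> VT - {r} \<Longrightarrow> par i \<in> VT \<and> (dep::nat\<Rightarrow>nat) (par i) < dep i"
    and Xs: "\<And>i. i \<in> VT \<Longrightarrow> X i \<subseteq> verts G"
    and Ed: "\<And>u v. (u,v) \<in> edges G \<Longrightarrow> \<exists>i\<in>VT. u \<in> X i \<and> v \<in> X i"
    and Top: "\<And>v. v \<in> verts G \<Longrightarrow> tp v \<in> VT \<and> v \<in> X (tp v)"
    and Up: "\<And>v i. v \<in> verts G \<Longrightarrow> i \<in> VT \<Longrightarrow> v \<in> X i \<Longrightarrow> i \<noteq> tp v \<Longrightarrow> i \<noteq> r \<and> v \<in> X (par i)"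
  shows "tree_decomposition G (rtree VT r par) X"
  unfolding tree_decomposition_def
proof (intro conjI allI ballI impI)
  show "is_tree (rtree VT r par)" using rtree_is_tree[OF fin r P] by blast
  show "\<And>i. i \<in> verts (rtree VT r par) \<Longrightarrow> X i \<subseteq> verts G" using Xs by (simp add: rtree_def)
  show "\<And>v. v \<in> verts G \<Longrightarrow> \<exists>i\<in>verts (rtree VT r par). v \<in> X i" using Top by (auto simp: rtree_def)
  show "\<And>u v. (u,v) \<in> edges G \<Longrightarrow> \<exists>i\<in>verts (rtree VT r par). u \<in> X i \<and> v \<in> X i" using Ed by (simp add: rtree_def)
  fix v assume v: "v \<in> verts G"
  define B where "B = {i \<in> verts (rtree VT r par). v \<in> X i}"
  have B: "B = {i \<in> VT. v \<in> X i}" unfolding B_def by (simp add: rtree_def)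
  have ind: "induced (rtree VT r par) B = (B, snd (rtree VT r par) \<inter> B \<times> B)"
    unfolding induced_def B by (auto simp: rtree_def)
  have reach: "(i, tp v) \<in> (snd (rtree VT r par) \<inter> B \<times> B)\<^sup>*" if "i \<in> B" for i
    by (rule rtree_reach_root[OF P]) (use Up v B that P in auto)
  have tB: "tp v \<in> B" using Top v B by auto
  show "connected_graph (induced (rtree VT r par) {i \<in> verts (rtree VT r par). v \<in> X i})"
    unfolding B_def[symmetric] ind connected_graph_def
  proof (intro conjI ballI)
    show "fst (B, snd (rtree VT r par) \<inter> B \<times> B) \<noteq> {}" using tB by auto
    fix x y assume "x \<in> fst (B, snd (rtree VT r par) \<inter> B \<times> B)" "y \<in> fst (B, snd (rtree VT r par) \<inter> B \<times> B)"
    then have "x \<in> B" "y \<in> B" by auto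
    then have 1: "(x, tp v) \<in> (snd (rtree VT r par) \<inter> B \<times> B)\<^sup>*" and
      2: "(tp v, y) \<in> (snd (rtree VT r par) \<inter> B \<times> B)\<^sup>*"
      using reach rtr_sym[OF rtree_sym] by blast+
    show "(x, y) \<in> (snd (B, snd (rtree VT r par) \<inter> B \<times> B))\<^sup>*" using 1 2 by simp
  qed
qed

definition td_ok :: "graph \<Rightarrow> nat \<Rightarrow> bool" where
  "td_ok G w \<longleftrightarrow> (\<exists>T X. tree_decomposition G T X \<and> td_width T X \<le> w)"

lemma treewidth_le:
  assumes "tree_decomposition G T X"
  shows "treewidth G \<le> td_width T X"
  unfolding treewidth_def by (rule Least_le) (use assms in blast)



lemma induced_induced: "induced (induced T A) C = induced T (A \<inter> C)"
  unfolding induced_def by auto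

lemma wf_induced: "wf_graph G \<Longrightarrow> wf_graph (induced G S)"
  unfolding wf_graph_def induced_def by auto

lemma has_cycle_mono:
  assumes "has_cycle H" "verts H \<subseteq> verts G" "edges H \<subseteq> edges G"
  shows "has_cycle G"
  using assms unfolding has_cycle_def by blast

lemma shortcut:
  assumes N1: "\<And>x. (i,x) \<in> R \<Longrightarrow> x = j" and N2: "\<And>x. (x,i) \<in> R \<Longrightarrow> x = j"
    and uw: "(u,w) \<in> R\<^sup>*" and u: "u \<noteq> i"
  shows "(w \<noteq> i \<longrightarrow> (u,w) \<in> (R \<inter> (-{i}) \<times> (-{i}))\<^sup>*) \<and> (w = i \<longrightarrow> (u,j) \<in> (R \<inter> (-{i}) \<times> (-{i}))\<^sup>*)"
  using uw
proof (induction rule: rtrancl_induct)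
  case base then show ?case using u by simp
next
  case (step y w)
  show ?case
  proof (cases "y = i")
    case True
    then show ?thesis using step N1 by auto
  next
    case False
    show ?thesis
    proof (cases "w = i")
      case True then have "y = j" using N2 step by auto
      then show ?thesis using step False True by auto
    next
      case wF: False
      then have "(y,w) \<in> R \<inter> (-{i}) \<times> (-{i})" using step False by auto
      then show ?thesis using step False wF by (meson rtrancl.rtrancl_into_rtrancl)
    qed
  qed
qed

lemma conn_remove_leaf:
  assumes wf: "wf_graph T" and N: "\<And>x. (i,x) \<in> edges T \<Longrightarrow> x = j" and ij: "(i,j) \<in> edges T"
    and S: "S \<subseteq> verts T" and c: "connected_graph (induced T S)" and jS: "i \<in> S \<Longrightarrow> j \<in> S"
  shows "connected_graph (induced T (S - {i}))"
proof -
  have sym: "\<And>x y. (x,y) \<in> edges T \<Longrightarrow> (y,x) \<in> edges T" using wf unfolding wf_graph_def by blast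
  have ji: "j \<noteq> i" using wf ij unfolding wf_graph_def by blast
  have ne: "S \<noteq> {}" using c S unfolding connected_graph_def induced_def by auto
  have ind: "induced T S = (S, edges T \<inter> S \<times> S)" using S unfolding induced_def by auto
  have ind2: "induced T (S - {i}) = (S - {i}, edges T \<inter> (S - {i}) \<times> (S - {i}))" using S unfolding induced_def by auto
  show ?thesis unfolding ind2 connected_graph_def
  proof (intro conjI ballI)
    show "fst (S - {i}, edges T \<inter> (S - {i}) \<times> (S - {i})) \<noteq> {}" using ne jS ji by auto
    fix u w assume "u \<in> fst (S - {i}, edges T \<inter> (S - {i}) \<times> (S - {i}))" "w \<in> fst (S - {i}, edges T \<inter> (S - {i}) \<times> (S - {i}))"
    then have uw: "u \<in> S" "w \<in> S" "u \<noteq> i" "w \<noteq> i" by auto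
    then have "(u,w) \<in> (edges T \<inter> S \<times> S)\<^sup>*" using c unfolding ind connected_graph_def by auto
    then have "(u,w) \<in> (edges T \<inter> S \<times> S \<inter> (-{i}) \<times> (-{i}))\<^sup>*"
      using shortcut[of i "edges T \<inter> S \<times> S" j u w] N sym uw by blast
    moreover have "edges T \<inter> S \<times> S \<inter> (-{i}) \<times> (-{i}) = edges T \<inter> (S - {i}) \<times> (S - {i})" by auto
    ultimately show "(u, w) \<in> (snd (S - {i}, edges T \<inter> (S - {i}) \<times> (S - {i})))\<^sup>*" by simp
  qed
qed

definition is_path :: "graph \<Rightarrow> nat list \<Rightarrow> bool" where
  "is_path G vs \<longleftrightarrow> distinct vs \<and> set vs \<subseteq> verts G \<and>
     (\<forall>k. k + 1 < length vs \<longrightarrow> (vs ! k, vs ! (k + 1)) \<in> edges G)"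

lemma is_path_len: "finite (verts G) \<Longrightarrow> is_path G vs \<Longrightarrow> length vs \<le> card (verts G)"
  unfolding is_path_def by (metis card_mono distinct_card)

lemma is_path_snoc: "is_path G vs \<Longrightarrow> vs \<noteq> [] \<Longrightarrow> z \<in> verts G \<Longrightarrow> z \<notin> set vs \<Longrightarrow> (last vs, z) \<in> edges G \<Longrightarrow> is_path G (vs @ [z])"
  unfolding is_path_def
  apply (auto simp: nth_append)
  by (metis Suc_lessI diff_Suc_1 last_conv_nth less_diff_conv)

lemma tree_leaf:
  assumes T: "is_tree T" and c2: "card (verts T) \<ge> 2"
  shows "\<exists>i\<in>verts T. \<exists>j. (i,j) \<in> edges T \<and> (\<forall>x. (i,x) \<in> edges T \<longrightarrow> x = j)"
proof -
  have wf: "wf_graph T" and con: "connected_graph T" and nc: "\<not> has_cycle T" using T unfolding is_tree_def by auto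
  have fin: "finite (verts T)" using wf unfolding wf_graph_def by auto
  have sym: "\<And>x y. (x,y) \<in> edges T \<Longrightarrow> (y,x) \<in> edges T" and EV: "edges T \<subseteq> verts T \<times> verts T"
    and irr: "\<And>x. (x,x) \<notin> edges T"
    using wf unfolding wf_graph_def by blast+
  obtain u w where uw: "u \<in> verts T" "w \<in> verts T" "u \<noteq> w"
  proof -
    have "\<not> (\<forall>x\<in>verts T. \<forall>y\<in>verts T. x = y)" using c2 card_le_Suc0_iff_eq[OF fin] by auto
    then show ?thesis using that by auto
  qed
  have "(u,w) \<in> (edges T)\<^sup>*" using con uw unfolding connected_graph_def by auto
  then obtain x where ux: "(u,x) \<in> edges T" using uw(3) by (metis converse_rtranclE)
  have p0: "is_path T [u,x]" using ux irr EV unfolding is_path_def by (auto simp: nth_Cons split: nat.splits)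
  obtain vs where vs: "is_path T vs \<and> length vs \<ge> 2"
    and mx: "\<And>ys. is_path T ys \<and> length ys \<ge> 2 \<Longrightarrow> length ys \<le> length vs"
  proof -
    have "\<exists>vs. (is_path T vs \<and> length vs \<ge> 2) \<and> (\<forall>ys. is_path T ys \<and> length ys \<ge> 2 \<longrightarrow> length ys \<le> length vs)"
      apply (rule ex_has_greatest_nat[of _ "[u,x]" _ "Suc (card (verts T))"])
      using p0 is_path_len[OF fin] by (auto simp: less_Suc_eq_le)
    then show ?thesis using that by blast
  qed
  define n where "n = length vs"
  have ne: "vs \<noteq> []" using vs by auto
  define lx where "lx = last vs"
  have lxn: "lx = vs ! (n - 1)" using ne unfolding lx_def n_def by (simp add: last_conv_nth)
  have e1: "(vs ! (n-2), lx) \<in> edges T"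
  proof -
    have "n - 2 + 1 < length vs" using vs n_def by auto
    then have "(vs!(n-2), vs!(n-2+1)) \<in> edges T" using vs unfolding is_path_def by blast
    moreover have "n-2+1 = n-1" using vs n_def by auto
    ultimately show ?thesis using lxn by simp
  qed
  have "lx \<in> verts T" using vs ne unfolding lx_def is_path_def by auto
  moreover have "(lx, vs ! (n-2)) \<in> edges T" using e1 sym by auto
  moreover have "\<forall>z. (lx, z) \<in> edges T \<longrightarrow> z = vs ! (n-2)"
  proof (intro allI impI)
    fix z assume lz: "(lx, z) \<in> edges T"
    have zV: "z \<in> verts T" using lz EV by auto
    have "z \<in> set vs"
    proof (rule ccontr)
      assume "z \<notin> set vs"
      then have "is_path T (vs @ [z])" using is_path_snoc[of T vs z] vs ne zV lz lx_def by auto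
      then have "length (vs @ [z]) \<le> length vs" using vs by (intro mx) auto
      then show False by simp
    qed
    then obtain k where k: "k < n" "vs ! k = z" unfolding n_def by (metis in_set_conv_nth)
    have "k \<noteq> n - 1" using k lxn lz irr by auto
    moreover have "\<not> k < n - 2"
    proof
      assume kl: "k < n - 2"
      define cs where "cs = drop k vs"
      have "length cs \<ge> 3" using kl unfolding cs_def n_def by auto
      moreover have "distinct cs" using vs unfolding cs_def is_path_def by auto
      moreover have "set cs \<subseteq> verts T" using vs unfolding cs_def is_path_def by (meson set_drop_subset subset_trans)
      moreover have "\<forall>i. i + 1 < length cs \<longrightarrow> (cs ! i, cs ! (i + 1)) \<in> edges T"
        using vs unfolding cs_def is_path_def by (auto simp: add.commute add.left_commute)
      moreover have "(last cs, hd cs) \<in> edges T"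
      proof -
        have "last cs = lx" unfolding cs_def lx_def using kl n_def by (simp add: last_drop)
        moreover have "hd cs = z" unfolding cs_def using k kl n_def by (simp add: hd_drop_conv_nth)
        ultimately show ?thesis using lz by simp
      qed
      ultimately have "has_cycle T" unfolding has_cycle_def by blast
      then show False using nc by simp
    qed
    ultimately have "k = n - 2" using k by linarith
    then show "z = vs ! (n-2)" using k by simp
  qed
  ultimately show ?thesis by blast
qed



lemma bag_nbrs:
  assumes wf: "wf_graph G" and v: "v \<in> verts G" and deg: "\<delta> \<le> card {u. (v,u) \<in> edges G}"
    and sub: "insert v {u. (v,u) \<in> edges G} \<subseteq> Y" and fY: "finite Y"
  shows "\<delta> + 1 \<le> card Y"
proof -
  have 1: "v \<notin> {u. (v,u) \<in> edges G}" using wf unfolding wf_graph_def by simp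
  have 2: "finite {u. (v,u) \<in> edges G}" using sub fY by (meson finite_subset subset_insertI2 subset_refl)
  have 3: "card (insert v {u. (v,u) \<in> edges G}) = card {u. (v,u) \<in> edges G} + 1" using 1 2 by simp
  have 4: "card (insert v {u. (v,u) \<in> edges G}) \<le> card Y" using card_mono[OF fY sub] .
  show ?thesis using deg 3 4 by linarith
qed

lemma td_parts:
  assumes "tree_decomposition G T X"
  shows "is_tree T" "\<And>i. i \<in> verts T \<Longrightarrow> X i \<subseteq> verts G"
    "\<And>v. v \<in> verts G \<Longrightarrow> \<exists>i\<in>verts T. v \<in> X i"
    "\<And>u v. (u,v) \<in> edges G \<Longrightarrow> \<exists>i\<in>verts T. u \<in> X i \<and> v \<in> X i"
    "\<And>v. v \<in> verts G \<Longrightarrow> connected_graph (induced T {i \<in> verts T. v \<in> X i})"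
  using assms unfolding tree_decomposition_def by blast+

lemma td_leaf_removal:
  assumes td: "tree_decomposition G T X" and iV: "i \<in> verts T" and ij: "(i,j) \<in> edges T"
    and N: "\<And>x. (i,x) \<in> edges T \<Longrightarrow> x = j" and sub: "X i \<subseteq> X j"
  shows "tree_decomposition G (induced T (verts T - {i})) X"
proof -
  note tdp = td_parts[OF td]
  have T: "is_tree T" using tdp(1) .
  have wf: "wf_graph T" and con: "connected_graph T" and nc: "\<not> has_cycle T" using T unfolding is_tree_def by auto
  have EV: "edges T \<subseteq> verts T \<times> verts T" and irr: "\<And>x. (x,x) \<notin> edges T" using wf unfolding wf_graph_def by blast+
  have jV: "j \<in> verts T" and ji: "j \<noteq> i" using ij EV irr by auto
  have indV: "induced T (verts T) = T" unfolding induced_def using EV by (cases T) auto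
  have vi: "verts (induced T (verts T - {i})) = verts T - {i}" by (auto simp: induced_def)
  have ei: "edges (induced T (verts T - {i})) \<subseteq> edges T" by (auto simp: induced_def)
  have c1: "connected_graph (induced T (verts T))" using con indV by simp
  have f1: "is_tree (induced T (verts T - {i}))"
    unfolding is_tree_def
  proof (intro conjI)
    show "wf_graph (induced T (verts T - {i}))" using wf_induced[OF wf] .
    show "connected_graph (induced T (verts T - {i}))"
      using conn_remove_leaf[OF wf N ij subset_refl c1] jV by blast
    show "\<not> has_cycle (induced T (verts T - {i}))"
      using nc has_cycle_mono[of "induced T (verts T - {i})" T] vi ei by blast
  qed
  have f3: "\<forall>v\<in>verts G. \<exists>k\<in>verts (induced T (verts T - {i})). v \<in> X k"
  proof
    fix v assume "v \<in> verts G"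
    then obtain k where k: "k \<in> verts T" "v \<in> X k" using tdp(3) by blast
    show "\<exists>k\<in>verts (induced T (verts T - {i})). v \<in> X k"
    proof (cases "k = i")
      case True then show ?thesis using k sub jV ji vi by blast
    next
      case False then show ?thesis using k vi by blast
    qed
  qed
  have f4: "\<forall>u v. (u, v) \<in> edges G \<longrightarrow> (\<exists>k\<in>verts (induced T (verts T - {i})). u \<in> X k \<and> v \<in> X k)"
  proof (intro allI impI)
    fix u v assume "(u,v) \<in> edges G"
    then obtain k where k: "k \<in> verts T" "u \<in> X k" "v \<in> X k" using tdp(4) by blast
    show "\<exists>k\<in>verts (induced T (verts T - {i})). u \<in> X k \<and> v \<in> X k"
    proof (cases "k = i")
      case True then show ?thesis using k sub jV ji vi by blast
    next
      case False then show ?thesis using k vi by blast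
    qed
  qed
  have f5: "\<forall>v\<in>verts G. connected_graph (induced (induced T (verts T - {i})) {k \<in> verts (induced T (verts T - {i})). v \<in> X k})"
  proof
    fix v assume v: "v \<in> verts G"
    define S where "S = {k \<in> verts T. v \<in> X k}"
    have c: "connected_graph (induced T S)" using tdp(5)[OF v] unfolding S_def .
    have SV: "S \<subseteq> verts T" unfolding S_def by auto
    have jS: "i \<in> S \<Longrightarrow> j \<in> S" using sub jV unfolding S_def by auto
    have "connected_graph (induced T (S - {i}))"
      using conn_remove_leaf[OF wf N ij SV c jS] .
    moreover have "{k \<in> verts (induced T (verts T - {i})). v \<in> X k} = S - {i}"
      unfolding vi S_def by auto
    moreover have "(verts T - {i}) \<inter> (S - {i}) = S - {i}" using SV by auto
    ultimately show "connected_graph (induced (induced T (verts T - {i})) {k \<in> verts (induced T (verts T - {i})). v \<in> X k})"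
      by (simp add: induced_induced)
  qed
  have f2: "\<forall>k\<in>verts (induced T (verts T - {i})). X k \<subseteq> verts G"
    using tdp(2) vi by auto
  show ?thesis unfolding tree_decomposition_def using f1 f2 f3 f4 f5 by (simp only: simp_thms)
qed

lemma mindeg_bag_aux:
  assumes wf: "wf_graph G" and ne: "verts G \<noteq> {}"
    and deg: "\<And>v. v \<in> verts G \<Longrightarrow> \<delta> \<le> card {u. (v,u) \<in> edges G}"
  shows "tree_decomposition G T X \<Longrightarrow> card (verts T) = n \<Longrightarrow> \<exists>i\<in>verts T. \<delta> + 1 \<le> card (X i)"
proof (induction n arbitrary: T rule: less_induct)
  case (less n)
  have td: "tree_decomposition G T X" using less.prems by simp
  note tdp = td_parts[OF td]
  have T: "is_tree T" using tdp(1) .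
  have wfT: "wf_graph T" and con: "connected_graph T" using T unfolding is_tree_def by auto
  have finT: "finite (verts T)" using wfT unfolding wf_graph_def by auto
  have finG: "finite (verts G)" using wf unfolding wf_graph_def by auto
  have finX: "\<And>k. k \<in> verts T \<Longrightarrow> finite (X k)" using tdp(2) finG by (meson finite_subset)
  have neT: "verts T \<noteq> {}" using con unfolding connected_graph_def by auto
  have single: "\<delta> + 1 \<le> card (X k)" if k: "k \<in> verts T" and v: "v \<in> X k"
      and only: "\<And>k'. k' \<in> verts T \<Longrightarrow> v \<in> X k' \<Longrightarrow> k' = k" for k v
  proof -
    have vG: "v \<in> verts G" using tdp(2)[OF k] v by auto
    have "{u. (v,u) \<in> edges G} \<subseteq> X k"
    proof
      fix u assume "u \<in> {u. (v,u) \<in> edges G}"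
      then have "(v,u) \<in> edges G" by simp
      then obtain k' where "k' \<in> verts T" "v \<in> X k'" "u \<in> X k'" using tdp(4) by blast
      then show "u \<in> X k" using only by auto
    qed
    then show ?thesis using bag_nbrs[OF wf vG deg[OF vG]] v finX[OF k] by auto
  qed
  show ?case
  proof (cases "card (verts T) \<ge> 2")
    case False
    moreover have "card (verts T) \<noteq> 0" using neT finT by simp
    ultimately have "card (verts T) = 1" by linarith
    then obtain k where kk: "verts T = {k}" by (rule card_1_singletonE)
    obtain v where vG: "v \<in> verts G" using ne by auto
    then obtain k' where k': "k' \<in> verts T" "v \<in> X k'" using tdp(3) by blast
    have "\<delta> + 1 \<le> card (X k)" by (rule single[of k v]) (use kk k' in auto)
    then show ?thesis using kk by auto
  next
    case True
    obtain i j where iV: "i \<in> verts T" and ij: "(i,j) \<in> edges T" and N: "\<And>x. (i,x) \<in> edges T \<Longrightarrow> x = j"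
      using tree_leaf[OF T True] by blast
    show ?thesis
    proof (cases "X i \<subseteq> X j")
      case True
      have td': "tree_decomposition G (induced T (verts T - {i})) X"
        using td_leaf_removal[OF td iV ij N True] .
      have vi: "verts (induced T (verts T - {i})) = verts T - {i}" unfolding induced_def by auto
      have "card (verts (induced T (verts T - {i}))) < n"
        using card_Diff1_less[OF finT iV] less.prems(2) unfolding vi by simp
      then obtain k where "k \<in> verts (induced T (verts T - {i}))" "\<delta> + 1 \<le> card (X k)"
        using less.IH[OF _ td' refl] by blast
      then show ?thesis unfolding vi by auto
    next
      case False
      then obtain v where v: "v \<in> X i" "v \<notin> X j" by auto
      have vG: "v \<in> verts G" using tdp(2)[OF iV] v by auto
      define S where "S = {k \<in> verts T. v \<in> X k}"
      have c: "connected_graph (induced T S)" using tdp(5)[OF vG] unfolding S_def .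
      have indS: "induced T S = (S, edges T \<inter> S \<times> S)" unfolding induced_def S_def by auto
      have onlyi: "k = i" if k: "k \<in> verts T" "v \<in> X k" for k
      proof (rule ccontr)
        assume kn: "k \<noteq> i"
        have "i \<in> S" "k \<in> S" using k iV v unfolding S_def by auto
        then have "(i,k) \<in> (edges T \<inter> S \<times> S)\<^sup>*" using c unfolding indS connected_graph_def by auto
        then obtain x where "(i,x) \<in> edges T \<inter> S \<times> S" using kn by (metis converse_rtranclE)
        then have "x = j" "x \<in> S" using N by auto
        then show False using v S_def by auto
      qed
      have "\<delta> + 1 \<le> card (X i)" by (rule single[of i v]) (use iV v onlyi in blast)+
      then show ?thesis using iV by blast
    qed
  qed
qed

lemma mindeg_bag:
  assumes "wf_graph G" "verts G \<noteq> {}"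
    "\<And>v. v \<in> verts G \<Longrightarrow> \<delta> \<le> card {u. (v,u) \<in> edges G}"
    "tree_decomposition G T X"
  shows "\<exists>i\<in>verts T. \<delta> + 1 \<le> card (X i)"
  using mindeg_bag_aux[OF assms(1-3) assms(4)] by blast

lemma td_restrict:
  assumes "tree_decomposition G T X"
  shows "tree_decomposition (induced G S) T (\<lambda>i. X i \<inter> S)"
proof -
  have "\<And>v. v \<in> verts G \<inter> S \<Longrightarrow> {i \<in> verts T. v \<in> X i \<inter> S} = {i \<in> verts T. v \<in> X i}" by auto
  then show ?thesis using assms unfolding tree_decomposition_def induced_def by auto
qed

lemma no_cycle_single: "\<not> has_cycle ({x}, E)"
proof
  assume "has_cycle ({x}, E)"
  then obtain vs where "length vs \<ge> 3" "distinct vs" "set vs \<subseteq> {x}" unfolding has_cycle_def by auto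
  then have "length vs \<le> card {x}" by (metis card_mono distinct_card finite.emptyI finite.insertI)
  then show False using \<open>length vs \<ge> 3\<close> by simp
qed

lemma trivial_td:
  assumes wf: "wf_graph G"
  shows "tree_decomposition G ({0}, {}) (\<lambda>_. verts G)"
proof -
  have EV: "edges G \<subseteq> verts G \<times> verts G" using wf unfolding wf_graph_def by auto
  have c: "connected_graph ({0::nat}, {})" unfolding connected_graph_def by auto
  have t: "is_tree ({0}, {})"
    unfolding is_tree_def using no_cycle_single c by (auto simp: wf_graph_def)
  have i: "induced ({0::nat}, {}) {i \<in> {0}. v \<in> verts G} = ({0}, {})" if "v \<in> verts G" for v
    using that unfolding induced_def by auto
  show ?thesis unfolding tree_decomposition_def
  proof (intro conjI allI impI ballI)
    show "is_tree ({0}, {})" by (rule t)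
    fix u v assume "(u,v) \<in> edges G" then show "\<exists>i\<in>verts ({0::nat}, {}). u \<in> verts G \<and> v \<in> verts G" using EV by auto
  next
    fix v assume "v \<in> verts G" then show "connected_graph (induced ({0}, {}) {i \<in> verts ({0::nat}, {}). v \<in> verts G})"
      using i c by simp
  qed auto
qed

lemma treewidth_witness:
  assumes "wf_graph G"
  shows "\<exists>T X. tree_decomposition G T X \<and> td_width T X = treewidth G"
  unfolding treewidth_def
  by (rule LeastI_ex) (use trivial_td[OF assms] in blast)

lemma treewidth_ge_mindeg:
  assumes wf: "wf_graph G" and ne: "verts G \<noteq> {}"
    and deg: "\<And>v. v \<in> verts G \<Longrightarrow> \<delta> \<le> card {u. (v,u) \<in> edges G}"
  shows "\<delta> \<le> treewidth G"
proof -
  have fin: "finite (verts G)" using wf unfolding wf_graph_def by auto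
  obtain T X where td: "tree_decomposition G T X" and w: "td_width T X = treewidth G"
    using treewidth_witness[OF wf] by blast
  obtain i where i: "i \<in> verts T" "\<delta> + 1 \<le> card (X i)" using mindeg_bag[OF wf ne deg td] by blast
  have finT: "finite (verts T)" using td unfolding tree_decomposition_def is_tree_def wf_graph_def by auto
  have "card (X i) \<le> Max ((\<lambda>i. card (X i)) ` verts T)" using i finT by auto
  then show ?thesis using w i unfolding td_width_def by linarith
qed



definition elim :: "graph \<Rightarrow> nat \<Rightarrow> (nat \<Rightarrow> nat) \<Rightarrow> (nat \<Rightarrow> nat) \<Rightarrow> (nat \<Rightarrow> nat set) \<Rightarrow> nat \<Rightarrow> bool" where
  "elim G r par dep A m \<longleftrightarrow> r \<in> verts G \<and>
     (\<forall>v\<in>verts G - {r}. par v \<in> verts G \<and> dep (par v) < dep v) \<and>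
     A r = {r} \<and> (\<forall>v\<in>verts G - {r}. A v = insert v (A (par v))) \<and>
     (\<forall>v\<in>verts G. A v \<subseteq> verts G \<and> card (A v) \<le> m) \<and>
     (\<forall>u v. (u,v) \<in> edges G \<longrightarrow> u \<in> A v \<or> v \<in> A u)"

lemma elim_tw:
  assumes wf: "wf_graph G" and el: "elim G r par dep A m"
  shows "treewidth G \<le> m - 1"
proof -
  have r: "r \<in> verts G" and P: "\<And>v. v \<in> verts G - {r} \<Longrightarrow> par v \<in> verts G \<and> dep (par v) < dep v"
    and Ar: "A r = {r}" and Av: "\<And>v. v \<in> verts G - {r} \<Longrightarrow> A v = insert v (A (par v))"
    and As: "\<And>v. v \<in> verts G \<Longrightarrow> A v \<subseteq> verts G \<and> card (A v) \<le> m"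
    and Ed: "\<And>u v. (u,v) \<in> edges G \<Longrightarrow> u \<in> A v \<or> v \<in> A u"
    using el unfolding elim_def by blast+
  have fin: "finite (verts G)" and EV: "edges G \<subseteq> verts G \<times> verts G" using wf unfolding wf_graph_def by auto
  have self: "v \<in> A v" if "v \<in> verts G" for v
  proof (cases "v = r")
    case True then show ?thesis using Ar by simp
  next
    case False then show ?thesis using Av[of v] that by simp
  qed
  have td: "tree_decomposition G (rtree (verts G) r par) A"
  proof (rule rooted_td[where dep = dep and tp = id])
    show "finite (verts G)" by (rule fin)
    show "r \<in> verts G" by (rule r)
    show "\<And>i. i \<in> verts G - {r} \<Longrightarrow> par i \<in> verts G \<and> dep (par i) < dep i" by (rule P)
    show "\<And>i. i \<in> verts G \<Longrightarrow> A i \<subseteq> verts G" using As by blast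
    show "\<And>u v. (u, v) \<in> edges G \<Longrightarrow> \<exists>i\<in>verts G. u \<in> A i \<and> v \<in> A i"
    proof -
      fix u v assume e: "(u,v) \<in> edges G"
      then have uv: "u \<in> verts G" "v \<in> verts G" using EV by auto
      show "\<exists>i\<in>verts G. u \<in> A i \<and> v \<in> A i"
      proof (cases "u \<in> A v")
        case True then show ?thesis using uv self by blast
      next
        case False then have "v \<in> A u" using Ed e by blast
        then show ?thesis using uv self by blast
      qed
    qed
    show "\<And>v. v \<in> verts G \<Longrightarrow> id v \<in> verts G \<and> v \<in> A (id v)" using self by simp
    show "\<And>v i. v \<in> verts G \<Longrightarrow> i \<in> verts G \<Longrightarrow> v \<in> A i \<Longrightarrow> i \<noteq> id v \<Longrightarrow> i \<noteq> r \<and> v \<in> A (par i)"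
    proof -
      fix v i assume "v \<in> verts G" "i \<in> verts G" "v \<in> A i" "i \<noteq> id v"
      moreover have "i \<noteq> r" using calculation Ar by auto
      ultimately show "i \<noteq> r \<and> v \<in> A (par i)" using Av[of i] by auto
    qed
  qed
  have "treewidth G \<le> td_width (rtree (verts G) r par) A" by (rule treewidth_le[OF td])
  moreover have "Max ((\<lambda>i. card (A i)) ` verts G) \<le> m"
    using fin r As by (subst Max_le_iff) auto
  ultimately show ?thesis unfolding td_width_def rtree_def by simp
qed

definition cmp :: "graph \<Rightarrow> nat set \<Rightarrow> nat \<Rightarrow> nat set" where
  "cmp G S v = {w \<in> verts G - S. (v,w) \<in> (edges G \<inter> (verts G - S) \<times> (verts G - S))\<^sup>*}"

lemma cmp_basic:
  assumes wf: "wf_graph G" and v: "v \<in> verts G - S"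
  shows "v \<in> cmp G S v" "cmp G S v \<subseteq> verts G - S"
    "\<And>w. w \<in> cmp G S v \<Longrightarrow> cmp G S w = cmp G S v"
proof -
  define R where "R = edges G \<inter> (verts G - S) \<times> (verts G - S)"
  have sym: "\<And>x y. (x,y) \<in> R \<Longrightarrow> (y,x) \<in> R" using wf unfolding R_def wf_graph_def by blast
  show "v \<in> cmp G S v" using v unfolding cmp_def by auto
  show "cmp G S v \<subseteq> verts G - S" unfolding cmp_def by auto
  fix w assume w: "w \<in> cmp G S v"
  then have vw: "(v,w) \<in> R\<^sup>*" unfolding cmp_def R_def by auto
  have wv: "(w,v) \<in> R\<^sup>*" using rtr_sym[OF sym vw] .
  show "cmp G S w = cmp G S v"
  proof
    show "cmp G S w \<subseteq> cmp G S v" using vw unfolding cmp_def R_def[symmetric]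
      by (auto intro: rtrancl_trans)
    show "cmp G S v \<subseteq> cmp G S w" using wv unfolding cmp_def R_def[symmetric]
      by (auto intro: rtrancl_trans)
  qed
qed

lemma cmp_edge:
  assumes wf: "wf_graph G" and u: "u \<in> verts G - S" and v: "v \<in> verts G - S" and e: "(u,v) \<in> edges G"
  shows "v \<in> cmp G S u"
  using u v e unfolding cmp_def by auto

lemma cmp_connected:
  assumes wf: "wf_graph G" and v: "v \<in> verts G - S"
  shows "connected_graph (induced G (cmp G S v))"
proof -
  define R where "R = edges G \<inter> (verts G - S) \<times> (verts G - S)"
  define C where "C = cmp G S v"
  have sym: "\<And>x y. (x,y) \<in> R \<inter> C \<times> C \<Longrightarrow> (y,x) \<in> R \<inter> C \<times> C" using wf unfolding R_def wf_graph_def by blast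
  have CV: "C \<subseteq> verts G - S" using cmp_basic[OF wf v] unfolding C_def by blast
  have stay: "(v,x) \<in> (R \<inter> C \<times> C)\<^sup>*" if "(v,x) \<in> R\<^sup>*" for x
    using that
  proof (induction rule: rtrancl_induct)
    case base then show ?case by simp
  next
    case (step y z)
    have "y \<in> C" "z \<in> C" using step.hyps unfolding C_def cmp_def R_def
      by (auto intro: rtrancl_into_rtrancl)
    then show ?case using step by (meson IntI mem_Sigma_iff rtrancl_into_rtrancl)
  qed
  have ind: "induced G C = (C, R \<inter> C \<times> C)" using CV unfolding induced_def R_def by auto
  show ?thesis unfolding C_def[symmetric] ind connected_graph_def
  proof (intro conjI ballI)
    show "fst (C, R \<inter> C \<times> C) \<noteq> {}" using cmp_basic(1)[OF wf v] C_def by auto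
    fix x y assume "x \<in> fst (C, R \<inter> C \<times> C)" "y \<in> fst (C, R \<inter> C \<times> C)"
    then have "(v,x) \<in> R\<^sup>*" "(v,y) \<in> R\<^sup>*" unfolding C_def cmp_def R_def by auto
    then have "(v,x) \<in> (R \<inter> C \<times> C)\<^sup>*" "(v,y) \<in> (R \<inter> C \<times> C)\<^sup>*" using stay by auto
    then have "(x,v) \<in> (R \<inter> C \<times> C)\<^sup>*" "(v,y) \<in> (R \<inter> C \<times> C)\<^sup>*" using rtr_sym[OF sym] by auto
    then show "(x, y) \<in> (snd (C, R \<inter> C \<times> C))\<^sup>*" by simp
  qed
qed

lemma exit_set:
  assumes wf: "wf_graph G" and yz: "(y,z) \<in> (edges G)\<^sup>*" and z: "z \<in> S" and y: "y \<in> verts G"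
  shows "y \<in> S \<or> (\<exists>u x. (y,u) \<in> (edges G \<inter> (verts G - S) \<times> (verts G - S))\<^sup>* \<and> (u,x) \<in> edges G \<and> x \<in> S)"
  using yz y
proof (induction rule: converse_rtrancl_induct)
  case base then show ?case using z by simp
next
  case (step y y')
  have EV: "edges G \<subseteq> verts G \<times> verts G" using wf unfolding wf_graph_def by auto
  have y'V: "y' \<in> verts G" using step.hyps(1) EV by auto
  show ?case
  proof (cases "y \<in> S")
    case True then show ?thesis by simp
  next
    case yS: False
    show ?thesis
    proof (cases "y' \<in> S")
      case True then show ?thesis using step.hyps(1) by blast
    next
      case False
      then obtain u x where ux: "(y',u) \<in> (edges G \<inter> (verts G - S) \<times> (verts G - S))\<^sup>*" "(u,x) \<in> edges G" "x \<in> S"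
        using step.IH y'V by blast
      have "(y,y') \<in> edges G \<inter> (verts G - S) \<times> (verts G - S)" using step.hyps(1) step.prems yS False y'V by auto
      then show ?thesis using ux by (meson converse_rtrancl_into_rtrancl)
    qed
  qed
qed

lemma elim_parts:
  assumes "elim G r par dep A m"
  shows "r \<in> verts G" "\<And>v. v \<in> verts G - {r} \<Longrightarrow> par v \<in> verts G \<and> dep (par v) < dep v"
    "A r = {r}" "\<And>v. v \<in> verts G - {r} \<Longrightarrow> A v = insert v (A (par v))"
    "\<And>v. v \<in> verts G \<Longrightarrow> A v \<subseteq> verts G \<and> card (A v) \<le> m"
    "\<And>u v. (u,v) \<in> edges G \<Longrightarrow> u \<in> A v \<or> v \<in> A u"
  using assms unfolding elim_def by blast+

definition pos :: "nat list \<Rightarrow> nat \<Rightarrow> nat" where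
  "pos qs q = (THE i. i < length qs \<and> qs ! i = q)"

lemma pos_nth: "distinct qs \<Longrightarrow> i < length qs \<Longrightarrow> pos qs (qs ! i) = i"
  unfolding pos_def by (rule the_equality) (auto simp: nth_eq_iff_index_eq)

lemma pos_in: "distinct qs \<Longrightarrow> q \<in> set qs \<Longrightarrow> pos qs q < length qs \<and> qs ! pos qs q = q"
  by (metis in_set_conv_nth pos_nth)

lemma glue:
  assumes wf: "wf_graph G" and qne: "qs \<noteq> []" and dq: "distinct qs" and qV: "set qs \<subseteq> verts G"
    and comp: "\<And>v. v \<in> verts G - set qs \<Longrightarrow> \<exists>u par dep A. elim (induced G (cmp G (set qs) v)) u par dep A m"
  shows "\<exists>par dep A. elim G (hd qs) par dep A (length qs + m)"
proof -
  define S where "S = set qs"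
  define W where "W = verts G - S"
  define c where "c = cmp G S"
  have EV: "edges G \<subseteq> verts G \<times> verts G" using wf unfolding wf_graph_def by auto
  have "\<forall>C\<in>c ` W. \<exists>x. elim (induced G C) (fst x) (fst (snd x)) (fst (snd (snd x))) (snd (snd (snd x))) m"
    using comp unfolding c_def W_def S_def by fastforce
  then obtain f where f: "\<And>C. C \<in> c ` W \<Longrightarrow> elim (induced G C) (fst (f C)) (fst (snd (f C))) (fst (snd (snd (f C)))) (snd (snd (snd (f C)))) m"
    using bchoice by metis
  define U where "U C = fst (f C)" for C
  define P where "P C = fst (snd (f C))" for C
  define D where "D C = fst (snd (snd (f C)))" for C
  define AA where "AA C = snd (snd (snd (f C)))" for C
  have cW1: "\<And>v. v \<in> W \<Longrightarrow> v \<in> c v" using cmp_basic(1)[OF wf] unfolding c_def W_def by blast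
  have cW2: "\<And>v. v \<in> W \<Longrightarrow> c v \<subseteq> W" using cmp_basic(2)[OF wf] unfolding c_def W_def by blast
  have cW3: "\<And>v w. v \<in> W \<Longrightarrow> w \<in> c v \<Longrightarrow> c w = c v" using cmp_basic(3)[OF wf] unfolding c_def W_def by blast
  have vind: "\<And>v. v \<in> W \<Longrightarrow> verts (induced G (c v)) = c v \<and> edges (induced G (c v)) = edges G \<inter> c v \<times> c v"
  proof -
    fix v assume vW: "v \<in> W"
    have "c v \<subseteq> verts G" using cW2[OF vW] unfolding W_def by blast
    then show "verts (induced G (c v)) = c v \<and> edges (induced G (c v)) = edges G \<inter> c v \<times> c v"
      unfolding induced_def by auto
  qed
  have el: "\<And>v. v \<in> W \<Longrightarrow> elim (induced G (c v)) (U (c v)) (P (c v)) (D (c v)) (AA (c v)) m"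
  proof -
    fix v assume "v \<in> W" then have "c v \<in> c ` W" by (rule imageI)
    from f[OF this] show "elim (induced G (c v)) (U (c v)) (P (c v)) (D (c v)) (AA (c v)) m"
      unfolding U_def P_def D_def AA_def .
  qed
  have cU: "\<And>v. v \<in> W \<Longrightarrow> U (c v) \<in> c v"
  proof -
    fix v assume v: "v \<in> W"
    from elim_parts(1)[OF el[OF v]] show "U (c v) \<in> c v" unfolding conjunct1[OF vind[OF v]] .
  qed
  have cP: "\<And>v w. v \<in> W \<Longrightarrow> w \<in> c v - {U (c v)} \<Longrightarrow> P (c v) w \<in> c v \<and> D (c v) (P (c v) w) < D (c v) w"
  proof -
    fix v w assume v: "v \<in> W" and w: "w \<in> c v - {U (c v)}"
    from elim_parts(2)[OF el[OF v]] w show "P (c v) w \<in> c v \<and> D (c v) (P (c v) w) < D (c v) w"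
      unfolding conjunct1[OF vind[OF v]] by blast
  qed
  have cA0: "\<And>v. v \<in> W \<Longrightarrow> AA (c v) (U (c v)) = {U (c v)}" using el elim_parts(3) by blast
  have cA1: "\<And>v w. v \<in> W \<Longrightarrow> w \<in> c v - {U (c v)} \<Longrightarrow> AA (c v) w = insert w (AA (c v) (P (c v) w))"
  proof -
    fix v w assume v: "v \<in> W" and w: "w \<in> c v - {U (c v)}"
    from elim_parts(4)[OF el[OF v]] w show "AA (c v) w = insert w (AA (c v) (P (c v) w))"
      unfolding conjunct1[OF vind[OF v]] by blast
  qed
  have cA2: "\<And>v w. v \<in> W \<Longrightarrow> w \<in> c v \<Longrightarrow> AA (c v) w \<subseteq> c v \<and> card (AA (c v) w) \<le> m"
  proof -
    fix v w assume v: "v \<in> W" and w: "w \<in> c v"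
    from elim_parts(5)[OF el[OF v]] w show "AA (c v) w \<subseteq> c v \<and> card (AA (c v) w) \<le> m"
      unfolding conjunct1[OF vind[OF v]] by blast
  qed
  have cE: "\<And>v x y. v \<in> W \<Longrightarrow> (x,y) \<in> edges G \<Longrightarrow> x \<in> c v \<Longrightarrow> y \<in> c v \<Longrightarrow> x \<in> AA (c v) y \<or> y \<in> AA (c v) x"
  proof -
    fix v x y assume "v \<in> W" "(x,y) \<in> edges G" "x \<in> c v" "y \<in> c v"
    then have "(x,y) \<in> edges (induced G (c v))" using vind by auto
    then show "x \<in> AA (c v) y \<or> y \<in> AA (c v) x" using el elim_parts(6) \<open>v \<in> W\<close> by blast
  qed
  define k where "k = length qs"
  define par where "par v = (if v \<in> S then qs ! (pos qs v - 1) else if v = U (c v) then last qs else P (c v) v)" for v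
  define dep where "dep v = (if v \<in> S then pos qs v else k + D (c v) v)" for v
  define A where "A v = (if v \<in> S then set (take (pos qs v + 1) qs) else S \<union> AA (c v) v)" for v
  have posS: "\<And>v. v \<in> S \<Longrightarrow> pos qs v < k \<and> qs ! pos qs v = v" using pos_in[OF dq] unfolding S_def k_def by blast
  have hd0: "hd qs = qs ! 0" using qne by (simp add: hd_conv_nth)
  have r: "hd qs \<in> S" using qne unfolding S_def by simp
  have posr: "pos qs (hd qs) = 0" using pos_nth[OF dq, of 0] qne hd0 by simp
  have lastq: "last qs = qs ! (k - 1)" using qne unfolding k_def by (simp add: last_conv_nth)
  have poslast: "pos qs (last qs) = k - 1" using pos_nth[OF dq, of "k-1"] qne lastq unfolding k_def by simp
  have take_all: "set (take k qs) = S" unfolding k_def S_def by simp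
  have k1: "k \<ge> 1" using qne unfolding k_def by (cases qs) auto
  have Ssub: "S \<subseteq> verts G" using qV unfolding S_def .
  have WS: "\<And>v. v \<in> verts G \<Longrightarrow> v \<notin> S \<Longrightarrow> v \<in> W" unfolding W_def by auto
  have e1: "hd qs \<in> verts G" using r Ssub by auto
  have e2: "\<forall>v\<in>verts G - {hd qs}. par v \<in> verts G \<and> dep (par v) < dep v"
  proof
      fix v assume v: "v \<in> verts G - {hd qs}"
      show "par v \<in> verts G \<and> dep (par v) < dep v"
      proof (cases "v \<in> S")
        case True
        then have p: "pos qs v < k" "qs ! pos qs v = v" using posS by auto
        have "pos qs v \<noteq> 0"
        proof
          assume "pos qs v = 0" then have "v = hd qs" using p hd0 by simp
          then show False using v by simp
        qed
        then have pp: "pos qs (qs ! (pos qs v - 1)) = pos qs v - 1" using pos_nth[OF dq] p unfolding k_def by simp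
        have "qs ! (pos qs v - 1) \<in> S" using p unfolding S_def k_def by simp
        then show ?thesis using True pp Ssub \<open>pos qs v \<noteq> 0\<close> unfolding par_def dep_def by auto
      next
        case False
        then have vW: "v \<in> W" using v WS by auto
        show ?thesis
        proof (cases "v = U (c v)")
          case True
          have "last qs \<in> S" using qne unfolding S_def by simp
          then show ?thesis using True False poslast k1 Ssub unfolding par_def dep_def by auto
        next
          case nU: False
          have pw: "P (c v) v \<in> c v" "D (c v) (P (c v) v) < D (c v) v" using cP[OF vW, of v] cW1[OF vW] nU by blast+
          then have pW: "P (c v) v \<in> W" "c (P (c v) v) = c v" using cW2[OF vW] cW3[OF vW] by blast+
          then have "P (c v) v \<notin> S" "P (c v) v \<in> verts G" unfolding W_def by auto
          then show ?thesis using pw pW False nU unfolding par_def dep_def by auto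
        qed
      qed
  qed
  have e3: "A (hd qs) = {hd qs}" using r posr hd0 qne unfolding A_def by (cases qs) auto
  have e4: "\<forall>v\<in>verts G - {hd qs}. A v = insert v (A (par v))"
  proof
      fix v assume v: "v \<in> verts G - {hd qs}"
      show "A v = insert v (A (par v))"
      proof (cases "v \<in> S")
        case True
        then have p: "pos qs v < k" "qs ! pos qs v = v" using posS by auto
        have p0: "pos qs v \<noteq> 0"
        proof
          assume "pos qs v = 0" then have "v = hd qs" using p hd0 by simp
          then show False using v by simp
        qed
        then have pp: "pos qs (qs ! (pos qs v - 1)) = pos qs v - 1" using pos_nth[OF dq] p unfolding k_def by simp
        have pS: "qs ! (pos qs v - 1) \<in> S" using p unfolding S_def k_def by simp
        have "take (pos qs v + 1) qs = take (pos qs v) qs @ [qs ! pos qs v]"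
          using p unfolding k_def by (simp add: take_Suc_conv_app_nth)
        then have "set (take (pos qs v + 1) qs) = insert v (set (take (pos qs v) qs))" using p by simp
        then show ?thesis using True pS pp p0 unfolding A_def par_def by simp
      next
        case False
        then have vW: "v \<in> W" using v WS by auto
        show ?thesis
        proof (cases "v = U (c v)")
          case True
          have "last qs \<in> S" using qne unfolding S_def by simp
          moreover have "A (last qs) = S" using calculation poslast k1 take_all unfolding A_def by simp
          ultimately show ?thesis using True False cA0[OF vW] unfolding A_def par_def by auto
        next
          case nU: False
          have pw: "P (c v) v \<in> c v" using cP[OF vW, of v] cW1[OF vW] nU by blast
          then have pW: "P (c v) v \<in> W" "c (P (c v) v) = c v" using cW2[OF vW] cW3[OF vW] by blast+
          then have pS: "P (c v) v \<notin> S" unfolding W_def by auto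
          have "AA (c v) v = insert v (AA (c v) (P (c v) v))" using cA1[OF vW, of v] cW1[OF vW] nU by blast
          then show ?thesis using False nU pS pW unfolding A_def par_def by auto
        qed
      qed
  qed
  have e5: "\<forall>v\<in>verts G. A v \<subseteq> verts G \<and> card (A v) \<le> k + m"
  proof
      fix v assume v: "v \<in> verts G"
      show "A v \<subseteq> verts G \<and> card (A v) \<le> k + m"
      proof (cases "v \<in> S")
        case True
        have "set (take (pos qs v + 1) qs) \<subseteq> S" unfolding S_def by (rule set_take_subset)
        moreover have "card (set (take (pos qs v + 1) qs)) \<le> k"
          unfolding k_def by (metis card_length length_take min.bounded_iff order.trans)
        ultimately show ?thesis using True Ssub unfolding A_def by auto
      next
        case False
        then have vW: "v \<in> W" using v WS by auto
        have a: "AA (c v) v \<subseteq> c v" "card (AA (c v) v) \<le> m" using cA2[OF vW, of v] cW1[OF vW] by blast+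
        have "c v \<subseteq> verts G" using cW2[OF vW] unfolding W_def by blast
        moreover have "card S \<le> k" unfolding S_def k_def by (rule card_length)
        moreover have "card (S \<union> AA (c v) v) \<le> card S + card (AA (c v) v)" by (rule card_Un_le)
        ultimately show ?thesis using False a Ssub unfolding A_def by auto
      qed
  qed
  have e6: "\<forall>x y. (x,y) \<in> edges G \<longrightarrow> x \<in> A y \<or> y \<in> A x"
  proof (intro allI impI)
      fix x y assume e: "(x,y) \<in> edges G"
      then have xy: "x \<in> verts G" "y \<in> verts G" using EV by auto
      show "x \<in> A y \<or> y \<in> A x"
      proof (cases "x \<in> S")
        case xS: True
        show ?thesis
        proof (cases "y \<in> S")
          case yS: True
          have px: "pos qs x < k" "qs ! pos qs x = x" and py: "pos qs y < k" "qs ! pos qs y = y" using posS xS yS by auto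
          show ?thesis
          proof (cases "pos qs x \<le> pos qs y")
            case True
            then have "x \<in> set (take (pos qs y + 1) qs)" using px py unfolding k_def
              by (metis in_set_conv_nth le_imp_less_Suc length_take min.strict_coboundedI2 min_less_iff_conj nth_take Suc_eq_plus1)
            then show ?thesis using yS unfolding A_def by auto
          next
            case False
            then have "y \<in> set (take (pos qs x + 1) qs)" using px py unfolding k_def
              by (metis in_set_conv_nth less_imp_le_nat le_imp_less_Suc length_take min.strict_coboundedI2 min_less_iff_conj nth_take Suc_eq_plus1 not_le)
            then show ?thesis using xS unfolding A_def by auto
          qed
        next
          case False then show ?thesis using xS unfolding A_def by auto
        qed
      next
        case xS: False
        show ?thesis
        proof (cases "y \<in> S")
          case True then show ?thesis using xS unfolding A_def by auto
        next
          case yS: False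
          have xW: "x \<in> W" "y \<in> W" using xy xS yS WS by auto
          have "y \<in> c x" using cmp_edge[OF wf _ _ e] xW unfolding c_def W_def by blast
          then have cy: "c y = c x" using cW3[OF xW(1)] by blast
          have "x \<in> AA (c x) y \<or> y \<in> AA (c x) x" using cE[OF xW(1) e] cW1[OF xW(1)] \<open>y \<in> c x\<close> by blast
          then show ?thesis using xS yS cy unfolding A_def by auto
        qed
      qed
  qed
  have "elim G (hd qs) par dep A (length qs + m)"
    unfolding elim_def k_def[symmetric] using e1 e2 e3 e4 e5 e6 by (simp only: simp_thms)
  then show ?thesis by blast
qed

lemma path_elim:
  "wf_graph G \<Longrightarrow> connected_graph G \<Longrightarrow> r \<in> verts G \<Longrightarrow> card (verts G) = n \<Longrightarrow>
   (\<forall>vs. is_path G vs \<and> vs \<noteq> [] \<and> hd vs = r \<longrightarrow> length vs \<le> m) \<Longrightarrow>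
   \<exists>par dep A. elim G r par dep A m"
proof (induction n arbitrary: G r m rule: less_induct)
  case (less n)
  have wf: "wf_graph G" and con: "connected_graph G" and r: "r \<in> verts G" and cn: "card (verts G) = n"
    and pb: "\<forall>vs. is_path G vs \<and> vs \<noteq> [] \<and> hd vs = r \<longrightarrow> length vs \<le> m" using less.prems by auto
  have fin: "finite (verts G)" and EV: "edges G \<subseteq> verts G \<times> verts G"
    and sym: "\<And>x y. (x,y) \<in> edges G \<Longrightarrow> (y,x) \<in> edges G" and irr: "\<And>x. (x,x) \<notin> edges G"
    using wf unfolding wf_graph_def by blast+
  have "is_path G [r]" using r unfolding is_path_def by simp
  then have m1: "1 \<le> m" using pb by fastforce
  have "\<exists>par dep A. elim G (hd [r]) par dep A (length [r] + (m - 1))"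
  proof (rule glue[OF wf])
    show "[r] \<noteq> []" "distinct [r]" "set [r] \<subseteq> verts G" using r by auto
    fix v assume v: "v \<in> verts G - set [r]"
    then have vr: "v \<in> verts G - {r}" by simp
    have "(v, r) \<in> (edges G)\<^sup>*" using con v r unfolding connected_graph_def by auto
    then obtain u x where vu: "(v,u) \<in> (edges G \<inter> (verts G - {r}) \<times> (verts G - {r}))\<^sup>*"
      and ux: "(u,x) \<in> edges G" and xr: "x \<in> {r}"
      using exit_set[OF wf, of v r "{r}"] vr by auto
    have uW: "u \<in> verts G - {r}"
    proof (cases "u = v")
      case True then show ?thesis using vr by simp
    next
      case False then show ?thesis using vu by (metis IntE mem_Sigma_iff rtranclE)
    qed
    have uc: "u \<in> cmp G {r} v" using vu uW unfolding cmp_def by auto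
    have cu: "cmp G {r} u = cmp G {r} v" using cmp_basic(3)[OF wf vr uc] .
    define H where "H = induced G (cmp G {r} v)"
    have cV: "cmp G {r} v \<subseteq> verts G - {r}" using cmp_basic(2)[OF wf vr] .
    have vH: "verts H = cmp G {r} v" "edges H \<subseteq> edges G" using cV unfolding H_def induced_def by auto
    have wfH: "wf_graph H" unfolding H_def by (rule wf_induced[OF wf])
    have conH: "connected_graph H" unfolding H_def by (rule cmp_connected[OF wf vr])
    have uH: "u \<in> verts H" using uc vH by simp
    have cardH: "card (verts H) < n"
    proof -
      have "card (verts H) \<le> card (verts G - {r})" using vH cV fin by (simp add: card_mono)
      also have "\<dots> < card (verts G)" using card_Diff1_less[OF fin r] .
      finally show ?thesis using cn by simp
    qed
    have pbH: "\<forall>vs. is_path H vs \<and> vs \<noteq> [] \<and> hd vs = u \<longrightarrow> length vs \<le> m - 1"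
    proof (intro allI impI)
      fix vs assume a: "is_path H vs \<and> vs \<noteq> [] \<and> hd vs = u"
      have "is_path G (r # vs)"
        unfolding is_path_def
      proof (intro conjI allI impI)
        have "r \<notin> set vs" using a vH cV unfolding is_path_def by auto
        then show "distinct (r # vs)" using a unfolding is_path_def by simp
        show "set (r # vs) \<subseteq> verts G" using a vH cV r unfolding is_path_def by auto
        fix k assume k: "k + 1 < length (r # vs)"
        show "((r # vs) ! k, (r # vs) ! (k + 1)) \<in> edges G"
        proof (cases k)
          case 0
          have "(r, u) \<in> edges G" using ux xr sym by auto
          moreover have "vs ! 0 = u" using a by (metis hd_conv_nth)
          ultimately show ?thesis using 0 by simp
        next
          case (Suc k')
          then have "(vs ! k', vs ! (k' + 1)) \<in> edges H" using a k unfolding is_path_def by auto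
          then show ?thesis using Suc vH by auto
        qed
      qed
      then have "length (r # vs) \<le> m" using pb by auto
      then show "length vs \<le> m - 1" by simp
    qed
    obtain par dep A where "elim H u par dep A (m - 1)"
      using less.IH[OF cardH wfH conH uH refl pbH] by blast
    then show "\<exists>u par dep A. elim (induced G (cmp G (set [r]) v)) u par dep A (m - 1)"
      unfolding H_def by auto
  qed
  then show ?case using m1 by simp
qed



lemma lolli_edge: "(i,j) \<in> edges (lollipop a b) \<longleftrightarrow> i < a + b \<and> j < a + b \<and>
   ((i < a \<and> j < a \<and> i \<noteq> j) \<or> (min i j \<ge> a - 1 \<and> (i = j + 1 \<or> j = i + 1)))"
  unfolding lollipop_def by simp

lemma lolli_verts: "verts (lollipop a b) = {0..<a+b}" unfolding lollipop_def by simp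

lemma lolli_wf: "wf_graph (lollipop a b)"
  unfolding wf_graph_def lolli_verts
proof (intro conjI allI impI)
  show "finite {0..<a+b}" by simp
  show "edges (lollipop a b) \<subseteq> {0..<a + b} \<times> {0..<a + b}" using lolli_edge by auto
  fix u v
  show "(u, v) \<in> edges (lollipop a b) \<Longrightarrow> (v, u) \<in> edges (lollipop a b)"
    unfolding lolli_edge by (auto simp: min.commute)
  show "(v, v) \<notin> edges (lollipop a b)" unfolding lolli_edge by auto
qed

lemma lolli_card: "card (verts (lollipop a b)) = a + b" unfolding lolli_verts by simp

lemma lolli_conn:
  assumes a: "1 \<le> a"
  shows "connected_graph (lollipop a b)"
proof -
  let ?E = "edges (lollipop a b)"
  have sym: "\<And>x y. (x,y) \<in> ?E \<Longrightarrow> (y,x) \<in> ?E" using lolli_wf unfolding wf_graph_def by blast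
  have reach: "(i, a - 1) \<in> ?E\<^sup>*" if "i < a + b" for i
    using that
  proof (induction i rule: less_induct)
    case (less i)
    show ?case
    proof (cases "i < a")
      case True
      show ?thesis
      proof (cases "i = a - 1")
        case True then show ?thesis by simp
      next
        case False
        then have "(i, a - 1) \<in> ?E" using \<open>i < a\<close> less.prems a unfolding lolli_edge by auto
        then show ?thesis by simp
      qed
    next
      case False
      then have "(i, i - 1) \<in> ?E" using less.prems a unfolding lolli_edge by auto
      moreover have "(i - 1, a - 1) \<in> ?E\<^sup>*" using less.IH[of "i - 1"] False less.prems a by auto
      ultimately show ?thesis by (meson converse_rtrancl_into_rtrancl)
    qed
  qed
  show ?thesis unfolding connected_graph_def lolli_verts
  proof (intro conjI ballI)
    show "{0..<a + b} \<noteq> {}" using a by simp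
    fix u v assume "u \<in> {0..<a + b}" "v \<in> {0..<a + b}"
    then have "(u, a - 1) \<in> ?E\<^sup>*" "(v, a - 1) \<in> ?E\<^sup>*" using reach by auto
    then have "(u, a - 1) \<in> ?E\<^sup>*" "(a - 1, v) \<in> ?E\<^sup>*" using rtr_sym[OF sym] by auto
    then show "(u, v) \<in> ?E\<^sup>*" by simp
  qed
qed

lemma lolli_embed:
  assumes wf: "wf_graph G" and a: "1 \<le> a"
    and hV: "\<And>i. i < a \<Longrightarrow> h i \<in> verts G"
    and hE: "\<And>i j. i < a \<Longrightarrow> j < a \<Longrightarrow> i \<noteq> j \<Longrightarrow> (h i, h j) \<in> edges G"
    and len: "length vs = b" and dvs: "distinct vs" and vsV: "set vs \<subseteq> verts G"
    and disj: "\<And>i. i < a \<Longrightarrow> h i \<notin> set vs"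
    and first: "vs \<noteq> [] \<Longrightarrow> (h (a - 1), vs ! 0) \<in> edges G"
    and cons: "\<And>k. k + 1 < b \<Longrightarrow> (vs ! k, vs ! (k + 1)) \<in> edges G"
  shows "contains_subgraph G (lollipop a b)"
proof -
  have sym: "\<And>x y. (x,y) \<in> edges G \<Longrightarrow> (y,x) \<in> edges G" and irr: "\<And>x. (x,x) \<notin> edges G"
    using wf unfolding wf_graph_def by blast+
  define f where "f i = (if i < a then h i else vs ! (i - a))" for i
  have hinj: "h i \<noteq> h j" if "i < a" "j < a" "i \<noteq> j" for i j
    using hE[OF that] irr by metis
  have "inj_on f (verts (lollipop a b))"
    unfolding inj_on_def lolli_verts
  proof (intro ballI impI)
    fix x y assume x: "x \<in> {0..<a+b}" and y: "y \<in> {0..<a+b}" and fxy: "f x = f y"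
    show "x = y"
    proof (cases "x < a")
      case xa: True
      show ?thesis
      proof (cases "y < a")
        case True then show ?thesis using xa fxy hinj unfolding f_def by metis
      next
        case False
        then have "vs ! (y - a) \<in> set vs" using y len by auto
        then show ?thesis using fxy xa False disj[OF xa] unfolding f_def by auto
      qed
    next
      case xa: False
      show ?thesis
      proof (cases "y < a")
        case True
        then have "vs ! (x - a) \<in> set vs" using x len xa by auto
        then show ?thesis using fxy xa True disj[OF True] unfolding f_def by auto
      next
        case False
        then have "vs ! (x - a) = vs ! (y - a)" using fxy xa unfolding f_def by auto
        moreover have "x - a < length vs" "y - a < length vs" using x y len xa False by auto
        ultimately have "x - a = y - a" using nth_eq_iff_index_eq[OF dvs] by blast
        then show ?thesis using xa False by auto
      qed
    qed
  qed
  moreover have "f ` verts (lollipop a b) \<subseteq> verts G"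
  proof
    fix z assume "z \<in> f ` verts (lollipop a b)"
    then obtain x where x: "x < a + b" "z = f x" unfolding lolli_verts by auto
    show "z \<in> verts G"
    proof (cases "x < a")
      case True then show ?thesis using x hV unfolding f_def by auto
    next
      case False then have "vs ! (x - a) \<in> set vs" using x len by auto
      then show ?thesis using x False vsV unfolding f_def by auto
    qed
  qed
  moreover have "\<forall>u v. (u, v) \<in> edges (lollipop a b) \<longrightarrow> (f u, f v) \<in> edges G"
  proof (intro allI impI)
    fix u v assume "(u,v) \<in> edges (lollipop a b)"
    then have uv: "u < a + b" "v < a + b" "(u < a \<and> v < a \<and> u \<noteq> v) \<or> (min u v \<ge> a - 1 \<and> (u = v + 1 \<or> v = u + 1))"
      unfolding lolli_edge by auto
    have step: "(f x, f (x + 1)) \<in> edges G" if "x \<ge> a - 1" "x + 1 < a + b" for x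
    proof (cases "x < a")
      case True
      then have "x = a - 1" using that by auto
      then have "vs \<noteq> []" using that len a by auto
      then show ?thesis using first \<open>x = a - 1\<close> a unfolding f_def by auto
    next
      case False
      then have "(vs ! (x - a), vs ! (x - a + 1)) \<in> edges G" using cons that by auto
      moreover have "x + 1 - a = x - a + 1" using False by auto
      ultimately show ?thesis using False unfolding f_def by auto
    qed
    show "(f u, f v) \<in> edges G"
    proof (cases "u < a \<and> v < a \<and> u \<noteq> v")
      case True then show ?thesis using hE unfolding f_def by auto
    next
      case False
      then have m: "min u v \<ge> a - 1" "u = v + 1 \<or> v = u + 1" using uv by auto
      show ?thesis
      proof (cases "v = u + 1")
        case True then show ?thesis using step[of u] m uv by auto
      next
        case False
        then have "u = v + 1" using m by auto
        then show ?thesis using step[of v] m uv sym by auto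
      qed
    qed
  qed
  ultimately show ?thesis unfolding contains_subgraph_def by blast
qed

lemma lolli_clique:
  assumes "contains_subgraph G (lollipop a b)"
  shows "\<exists>h. (\<forall>i<a. h i \<in> verts G) \<and> (\<forall>i<a. \<forall>j<a. i \<noteq> j \<longrightarrow> (h i, h j) \<in> edges G)"
proof -
  obtain f where f: "f ` verts (lollipop a b) \<subseteq> verts G"
    "\<forall>u v. (u, v) \<in> edges (lollipop a b) \<longrightarrow> (f u, f v) \<in> edges G"
    using assms unfolding contains_subgraph_def by blast
  have "\<forall>i<a. f i \<in> verts G" using f(1) unfolding lolli_verts by auto
  moreover have "\<forall>i<a. \<forall>j<a. i \<noteq> j \<longrightarrow> (f i, f j) \<in> edges G" using f(2) unfolding lolli_edge by auto
  ultimately show ?thesis by blast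
qed

lemma is_path_take: "is_path G vs \<Longrightarrow> is_path G (take n vs)"
  unfolding is_path_def by (auto dest: in_set_takeD)


lemma clique_inj:
  assumes wf: "wf_graph G" and hE: "\<And>i j. i < a \<Longrightarrow> j < a \<Longrightarrow> i \<noteq> j \<Longrightarrow> (h i, h j) \<in> edges G"
  shows "inj_on h {..<a}"
proof -
  have irr: "\<And>x. (x,x) \<notin> edges G" using wf unfolding wf_graph_def by blast
  show ?thesis unfolding inj_on_def using hE irr by (metis lessThan_iff)
qed

lemma tw_lolli:
  assumes wf: "wf_graph G" and con: "connected_graph G" and a: "1 \<le> a"
    and hV: "\<And>i. i < a \<Longrightarrow> h i \<in> verts G"
    and hE: "\<And>i j. i < a \<Longrightarrow> j < a \<Longrightarrow> i \<noteq> j \<Longrightarrow> (h i, h j) \<in> edges G"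
    and nc: "\<not> contains_subgraph G (lollipop a b)"
  shows "treewidth G \<le> a + b"
proof (cases "b = 0")
  case True
  have "contains_subgraph G (lollipop a 0)"
    by (rule lolli_embed[OF wf a hV hE, where vs="[]"]) auto
  then show ?thesis using nc True by simp
next
  case False
  have sym: "\<And>x y. (x,y) \<in> edges G \<Longrightarrow> (y,x) \<in> edges G" using wf unfolding wf_graph_def by blast
  have hinj: "inj_on h {..<a}" by (rule clique_inj[OF wf hE])
  define qs where "qs = map h [0..<a]"
  define Q where "Q = set qs"
  have Qh: "Q = h ` {..<a}" unfolding Q_def qs_def by auto
  have dq: "distinct qs" unfolding qs_def using hinj by (simp add: distinct_map atLeast_upt)
  have qne: "qs \<noteq> []" unfolding qs_def using a by simp
  have QV: "Q \<subseteq> verts G" unfolding Qh using hV by auto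
  have "\<exists>par dep A. elim G (hd qs) par dep A (length qs + (b - 1))"
  proof (rule glue[OF wf qne dq])
    show "set qs \<subseteq> verts G" using QV unfolding Q_def .
    fix v assume v0: "v \<in> verts G - set qs"
    then have v: "v \<in> verts G - Q" unfolding Q_def .
    have h0: "h 0 \<in> Q" unfolding Qh using a by auto
    have "(v, h 0) \<in> (edges G)\<^sup>*" using con v QV h0 unfolding connected_graph_def by auto
    then obtain u x where vu: "(v,u) \<in> (edges G \<inter> (verts G - Q) \<times> (verts G - Q))\<^sup>*"
      and ux: "(u,x) \<in> edges G" and xQ: "x \<in> Q"
      using exit_set[OF wf _ h0, of v] v by auto
    have uW: "u \<in> verts G - Q"
    proof (cases "u = v")
      case True then show ?thesis using v by simp
    next
      case False then show ?thesis using vu by (metis IntE mem_Sigma_iff rtranclE)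
    qed
    have uc: "u \<in> cmp G Q v" using vu uW unfolding cmp_def by auto
    obtain j where j: "j < a" "x = h j" using xQ unfolding Qh by auto
    define H where "H = induced G (cmp G Q v)"
    have cV: "cmp G Q v \<subseteq> verts G - Q" using cmp_basic(2)[OF wf v] .
    have vH: "verts H = cmp G Q v" "edges H \<subseteq> edges G" using cV unfolding H_def induced_def by auto
    have wfH: "wf_graph H" unfolding H_def by (rule wf_induced[OF wf])
    have conH: "connected_graph H" unfolding H_def by (rule cmp_connected[OF wf v])
    have uH: "u \<in> verts H" using uc vH by simp
    define sg where "sg i = (if i = j then a - 1 else if i = a - 1 then j else i)" for i
    define h' where "h' i = h (sg i)" for i
    have sga: "\<And>i. i < a \<Longrightarrow> sg i < a" unfolding sg_def using j a by auto
    have sginj: "\<And>i i'. i \<noteq> i' \<Longrightarrow> sg i \<noteq> sg i'" unfolding sg_def by auto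
    have pbH: "\<forall>vs. is_path H vs \<and> vs \<noteq> [] \<and> hd vs = u \<longrightarrow> length vs \<le> b - 1"
    proof (intro allI impI)
      fix vs assume pv: "is_path H vs \<and> vs \<noteq> [] \<and> hd vs = u"
      show "length vs \<le> b - 1"
      proof (rule ccontr)
        assume "\<not> length vs \<le> b - 1"
        then have lb: "b \<le> length vs" by auto
        define ws where "ws = take b vs"
        have pw: "is_path H ws" unfolding ws_def using is_path_take pv by blast
        have lw: "length ws = b" unfolding ws_def using lb by simp
        have wsc: "set ws \<subseteq> cmp G Q v" using pw vH unfolding is_path_def by auto
        have "contains_subgraph G (lollipop a b)"
        proof (rule lolli_embed[OF wf a, of h' ws])
          show "\<And>i. i < a \<Longrightarrow> h' i \<in> verts G" unfolding h'_def using hV sga by blast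
          show "\<And>i k. i < a \<Longrightarrow> k < a \<Longrightarrow> i \<noteq> k \<Longrightarrow> (h' i, h' k) \<in> edges G"
            unfolding h'_def using hE sga sginj by blast
          show "length ws = b" by (rule lw)
          show "distinct ws" using pw unfolding is_path_def by blast
          show "set ws \<subseteq> verts G" using wsc cV by blast
          show "\<And>i. i < a \<Longrightarrow> h' i \<notin> set ws"
          proof -
            fix i assume "i < a"
            then have "h' i \<in> Q" unfolding h'_def Qh using sga by blast
            then show "h' i \<notin> set ws" using wsc cV by blast
          qed
          show "ws \<noteq> [] \<Longrightarrow> (h' (a - 1), ws ! 0) \<in> edges G"
          proof -
            assume "ws \<noteq> []"
            have "ws ! 0 = vs ! 0" unfolding ws_def using False by simp
            also have "\<dots> = u" using pv by (metis hd_conv_nth)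
            finally have "ws ! 0 = u" .
            moreover have "h' (a - 1) = x" unfolding h'_def sg_def using j by auto
            ultimately show ?thesis using ux sym by simp
          qed
          show "\<And>k. k + 1 < b \<Longrightarrow> (ws ! k, ws ! (k + 1)) \<in> edges G"
            using pw lw vH unfolding is_path_def by blast
        qed
        then show False using nc by simp
      qed
    qed
    obtain par dep A where "elim H u par dep A (b - 1)"
      using path_elim[OF wfH conH uH refl pbH] by blast
    then show "\<exists>u par dep A. elim (induced G (cmp G (set qs) v)) u par dep A (b - 1)"
      unfolding H_def Q_def by blast
  qed
  then obtain par dep A where "elim G (hd qs) par dep A (length qs + (b - 1))" by blast
  then have "treewidth G \<le> length qs + (b - 1) - 1" by (rule elim_tw[OF wf])
  then show ?thesis unfolding qs_def by simp
qed

lemma kconn_deg: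
  assumes kc: "k_connected G k" and wf: "wf_graph G" and v: "v \<in> verts G"
  shows "k \<le> card {u. (v,u) \<in> edges G}"
proof (rule ccontr)
  assume "\<not> k \<le> card {u. (v,u) \<in> edges G}"
  then have lt: "card {u. (v,u) \<in> edges G} < k" by simp
  define N where "N = {u. (v,u) \<in> edges G}"
  have fin: "finite (verts G)" and EV: "edges G \<subseteq> verts G \<times> verts G" and irr: "\<And>x. (x,x) \<notin> edges G"
    using wf unfolding wf_graph_def by blast+
  have NV: "N \<subseteq> verts G" using EV unfolding N_def by auto
  have vN: "v \<notin> N" using irr unfolding N_def by auto
  have ck: "card (verts G) > k" and cc: "\<And>S. S \<subseteq> verts G \<Longrightarrow> card S < k \<Longrightarrow> connected_graph (induced G (verts G - S))"
    using kc unfolding k_connected_def by blast+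
  have c: "connected_graph (induced G (verts G - N))" using cc[OF NV] lt unfolding N_def by blast
  have "card (insert v N) < card (verts G)"
  proof -
    have "card (insert v N) = card N + 1" using vN NV fin by (simp add: finite_subset)
    then show ?thesis using lt ck unfolding N_def by linarith
  qed
  then have "\<not> verts G \<subseteq> insert v N"
  proof -
    assume lt2: "card (insert v N) < card (verts G)"
    show ?thesis
    proof
      assume s: "verts G \<subseteq> insert v N"
      have "finite (insert v N)" using NV fin finite_subset by blast
      then have "card (verts G) \<le> card (insert v N)" using s card_mono by blast
      then show False using lt2 by simp
    qed
  qed
  then obtain w where w: "w \<in> verts G" "w \<noteq> v" "w \<notin> N" by auto
  have ind: "induced G (verts G - N) = (verts G - N, edges G \<inter> (verts G - N) \<times> (verts G - N))"
    unfolding induced_def by auto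
  have "(v, w) \<in> (edges G \<inter> (verts G - N) \<times> (verts G - N))\<^sup>*"
    using c v vN w unfolding ind connected_graph_def by auto
  then obtain y where "(v,y) \<in> edges G \<inter> (verts G - N) \<times> (verts G - N)" using w(2) by (metis converse_rtranclE)
  then show False unfolding N_def by auto
qed

lemma greedy_path:
  assumes wf: "wf_graph G" and QV: "Q \<subseteq> verts G" and q: "q \<in> Q"
    and deg: "\<And>v. v \<in> verts G \<Longrightarrow> card Q + b \<le> card {u. (v,u) \<in> edges G}"
  shows "\<exists>ws. length ws = b \<and> is_path G (q # ws) \<and> set ws \<inter> Q = {}"
proof -
  have fin: "finite (verts G)" and EV: "edges G \<subseteq> verts G \<times> verts G" using wf unfolding wf_graph_def by blast+
  have finQ: "finite Q" using QV fin finite_subset by blast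
  have p0: "is_path G [q]" using q QV unfolding is_path_def by auto
  obtain ws where ws: "is_path G (q # ws) \<and> set ws \<inter> Q = {}"
    and mx: "\<And>ys. is_path G (q # ys) \<and> set ys \<inter> Q = {} \<Longrightarrow> length ys \<le> length ws"
  proof -
    have "\<exists>ws. (is_path G (q # ws) \<and> set ws \<inter> Q = {}) \<and> (\<forall>ys. is_path G (q # ys) \<and> set ys \<inter> Q = {} \<longrightarrow> length ys \<le> length ws)"
    proof (rule ex_has_greatest_nat[of _ "[]" _ "card (verts G)"])
      show "is_path G [q] \<and> set [] \<inter> Q = {}" using p0 by simp
      show "\<forall>y. is_path G (q # y) \<and> set y \<inter> Q = {} \<longrightarrow> length y < card (verts G)"
      proof (intro allI impI)
        fix y assume "is_path G (q # y) \<and> set y \<inter> Q = {}"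
        then have "length (q # y) \<le> card (verts G)" using is_path_len[OF fin] by blast
        then show "length y < card (verts G)" by simp
      qed
    qed
    then show ?thesis using that by blast
  qed
  show ?thesis
  proof (cases "b \<le> length ws")
    case True
    have "is_path G (take (Suc b) (q # ws))" using is_path_take ws by blast
    moreover have "set (take b ws) \<inter> Q = {}" using ws by (meson disjoint_iff in_set_takeD)
    ultimately show ?thesis using True by (intro exI[of _ "take b ws"]) simp
  next
    case False
    define x where "x = last (q # ws)"
    have xV: "x \<in> verts G" using ws unfolding x_def is_path_def by auto
    have sub: "{u. (x,u) \<in> edges G} \<subseteq> set ws \<union> Q"
    proof
      fix y assume y: "y \<in> {u. (x,u) \<in> edges G}"
      show "y \<in> set ws \<union> Q"
      proof (rule ccontr)
        assume n: "y \<notin> set ws \<union> Q"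
        have yV: "y \<in> verts G" using y EV by auto
        have "y \<notin> set (q # ws)" using n q by auto
        then have "is_path G ((q # ws) @ [y])" using is_path_snoc[of G "q # ws" y] ws yV y unfolding x_def by auto
        then have "is_path G (q # (ws @ [y])) \<and> set (ws @ [y]) \<inter> Q = {}" using ws n by auto
        then have "length (ws @ [y]) \<le> length ws" by (rule mx)
        then show False by simp
      qed
    qed
    have "card {u. (x,u) \<in> edges G} \<le> card (set ws \<union> Q)" using sub finQ by (simp add: card_mono)
    also have "\<dots> \<le> card (set ws) + card Q" by (rule card_Un_le)
    also have "\<dots> \<le> length ws + card Q" by (simp add: card_length)
    finally show ?thesis using deg[OF xV] False by linarith
  qed
qed

lemma kconn0:
  assumes wf: "wf_graph G" and con: "connected_graph G"
  shows "k_connected G 0"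
proof -
  have fin: "finite (verts G)" using wf unfolding wf_graph_def by blast
  have "verts G \<noteq> {}" using con unfolding connected_graph_def by blast
  then have "card (verts G) > 0" using fin by (simp add: card_gt_0_iff)
  then show ?thesis unfolding k_connected_def using con by simp
qed

lemma kappa_conn:
  assumes wf: "wf_graph G" and con: "connected_graph G"
  shows "k_connected G (kappa G)"
  unfolding kappa_def
proof (rule GreatestI_nat[of _ 0 "card (verts G)"])
  show "k_connected G 0" by (rule kconn0[OF wf con])
  show "\<And>y. k_connected G y \<Longrightarrow> y \<le> card (verts G)" unfolding k_connected_def by simp
qed

lemma kappa_ge:
  assumes wf: "wf_graph G" and kc: "k_connected G k"
  shows "k \<le> kappa G"
  unfolding kappa_def
proof (rule Greatest_le_nat[of _ k "card (verts G)"])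
  show "k_connected G k" by (rule kc)
  show "\<And>y. k_connected G y \<Longrightarrow> y \<le> card (verts G)" unfolding k_connected_def by simp
qed

lemma kappa_lolli:
  assumes wf: "wf_graph G" and con: "connected_graph G" and a: "1 \<le> a" and ka: "a + b \<le> kappa G"
    and hV: "\<And>i. i < a \<Longrightarrow> h i \<in> verts G"
    and hE: "\<And>i j. i < a \<Longrightarrow> j < a \<Longrightarrow> i \<noteq> j \<Longrightarrow> (h i, h j) \<in> edges G"
  shows "contains_subgraph G (lollipop a b)"
proof -
  have hinj: "inj_on h {..<a}" by (rule clique_inj[OF wf hE])
  define Q where "Q = h ` {..<a}"
  have cQ: "card Q = a" unfolding Q_def using hinj by (simp add: card_image)
  have QV: "Q \<subseteq> verts G" unfolding Q_def using hV by auto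
  have q: "h (a - 1) \<in> Q" unfolding Q_def using a by auto
  have deg: "\<And>v. v \<in> verts G \<Longrightarrow> card Q + b \<le> card {u. (v,u) \<in> edges G}"
    using kconn_deg[OF kappa_conn[OF wf con] wf] ka cQ by fastforce
  obtain ws where ws: "length ws = b" "is_path G (h (a - 1) # ws)" "set ws \<inter> Q = {}"
    using greedy_path[OF wf QV q deg] by blast
  show ?thesis
  proof (rule lolli_embed[OF wf a hV hE ws(1)])
    show "distinct ws" using ws(2) unfolding is_path_def by simp
    show "set ws \<subseteq> verts G" using ws(2) unfolding is_path_def by simp
    show "\<And>i. i < a \<Longrightarrow> h i \<notin> set ws" using ws(3) unfolding Q_def by blast
    show "ws \<noteq> [] \<Longrightarrow> (h (a - 1), ws ! 0) \<in> edges G"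
      using ws(2) unfolding is_path_def by (metis length_Cons length_greater_0_conv nth_Cons_0 nth_Cons_Suc Suc_eq_plus1 add_less_cancel_right list.size(3) Suc_less_eq)
    show "\<And>k. k + 1 < b \<Longrightarrow> (ws ! k, ws ! (k + 1)) \<in> edges G"
    proof -
      fix k assume "k + 1 < b"
      then have "Suc k + 1 < length (h (a - 1) # ws)" using ws(1) by simp
      then have "((h (a - 1) # ws) ! Suc k, (h (a - 1) # ws) ! (Suc k + 1)) \<in> edges G"
        using ws(2) unfolding is_path_def by blast
      then show "(ws ! k, ws ! (k + 1)) \<in> edges G" by simp
    qed
  qed
qed



definition mp :: "nat \<Rightarrow> nat \<Rightarrow> graph" where
  "mp p N = ({0..<p*N}, {(x,y). x < p*N \<and> y < p*N \<and> x mod p \<noteq> y mod p})"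

lemma mp_verts: "verts (mp p N) = {0..<p*N}" unfolding mp_def by simp
lemma mp_edge: "(x,y) \<in> edges (mp p N) \<longleftrightarrow> x < p*N \<and> y < p*N \<and> x mod p \<noteq> y mod p"
  unfolding mp_def by simp

lemma mp_wf: "wf_graph (mp p N)"
  unfolding wf_graph_def mp_def by auto

lemma succ_mod: "2 \<le> (p::nat) \<Longrightarrow> (v + 1) mod p \<noteq> v mod p"
  by (simp add: mod_Suc)

lemma part_elem: "(c::nat) < p \<Longrightarrow> t < N \<Longrightarrow> c + p * t < p * N \<and> (c + p * t) mod p = c"
proof -
  assume c: "c < p" and t: "t < N"
  have "c + p * t < p + p * t" using c by simp
  also have "\<dots> = p * (t + 1)" by (simp add: algebra_simps)
  also have "\<dots> \<le> p * N" using t by (intro mult_le_mono2) simp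
  finally show ?thesis using c by simp
qed

definition part :: "nat \<Rightarrow> nat \<Rightarrow> nat \<Rightarrow> nat set" where
  "part p N c = (\<lambda>t. c + p * t) ` {..<N}"

lemma part_card: "0 < p \<Longrightarrow> card (part p N c) = N"
  unfolding part_def by (subst card_image) (auto simp: inj_on_def)

lemma part_sub: "c < p \<Longrightarrow> x \<in> part p N c \<Longrightarrow> x < p * N \<and> x mod p = c"
  unfolding part_def using part_elem by auto

lemma part_avoid:
  assumes "0 < (p::nat)" "c < p" "finite S" "card S < N"
  shows "\<exists>x. x < p * N \<and> x mod p = c \<and> x \<notin> S"
proof -
  have "\<not> part p N c \<subseteq> S"
  proof
    assume "part p N c \<subseteq> S"
    then have "card (part p N c) \<le> card S" using assms(3) by (rule card_mono[rotated])
    then show False using part_card[OF assms(1)] assms(4) by simp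
  qed
  then obtain x where "x \<in> part p N c" "x \<notin> S" by blast
  then show ?thesis using part_sub[OF assms(2)] by blast
qed

lemma mp_deg:
  assumes p: "2 \<le> p" and v: "v \<in> verts (mp p N)"
  shows "N \<le> card {u. (v,u) \<in> edges (mp p N)}"
proof -
  define c where "c = (v + 1) mod p"
  have cp: "c < p" unfolding c_def using p by simp
  have cv: "c \<noteq> v mod p" unfolding c_def using succ_mod[OF p] .
  have "part p N c \<subseteq> {u. (v,u) \<in> edges (mp p N)}"
  proof
    fix x assume "x \<in> part p N c"
    then have "x < p * N" "x mod p = c" using part_sub[OF cp] by auto
    then show "x \<in> {u. (v,u) \<in> edges (mp p N)}" using v cv by (simp add: mp_edge mp_verts)
  qed
  moreover have "finite {u. (v,u) \<in> edges (mp p N)}"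
    by (rule finite_subset[of _ "{0..<p*N}"]) (auto simp: mp_edge)
  ultimately have "card (part p N c) \<le> card {u. (v,u) \<in> edges (mp p N)}" by (rule card_mono[rotated])
  then show ?thesis using part_card p by simp
qed

lemma mp_conn_minus:
  assumes p: "2 \<le> p" and S: "S \<subseteq> verts (mp p N)" and cS: "card S < N"
  shows "connected_graph (induced (mp p N) (verts (mp p N) - S))"
proof -
  define V where "V = {0..<p*N} - S"
  have finS: "finite S" using S finite_subset unfolding mp_verts by blast
  have ind: "induced (mp p N) (verts (mp p N) - S) = (V, edges (mp p N) \<inter> V \<times> V)"
    unfolding induced_def V_def mp_verts by auto
  have av: "\<And>c. c < p \<Longrightarrow> \<exists>x\<in>V. x mod p = c"
    using part_avoid[OF _ _ finS cS] p unfolding V_def by force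
  show ?thesis unfolding ind connected_graph_def
  proof (intro conjI ballI)
    show "fst (V, edges (mp p N) \<inter> V \<times> V) \<noteq> {}" using av[of 0] p by auto
    fix u w assume "u \<in> fst (V, edges (mp p N) \<inter> V \<times> V)" "w \<in> fst (V, edges (mp p N) \<inter> V \<times> V)"
    then have u: "u \<in> V" and w: "w \<in> V" by auto
    have uN: "u < p * N" and wN: "w < p * N" using u w unfolding V_def by auto
    show "(u, w) \<in> (snd (V, edges (mp p N) \<inter> V \<times> V))\<^sup>*"
    proof (cases "u mod p = w mod p")
      case False
      then have "(u, w) \<in> edges (mp p N) \<inter> V \<times> V" using u w uN wN by (simp add: mp_edge)
      then show ?thesis by auto
    next
      case True
      define c where "c = (u + 1) mod p"
      have cp: "c < p" unfolding c_def using p by simp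
      have cu: "c \<noteq> u mod p" unfolding c_def using succ_mod[OF p] .
      obtain z where z: "z \<in> V" "z mod p = c" using av[OF cp] by blast
      have zN: "z < p * N" using z unfolding V_def by auto
      have "(u, z) \<in> edges (mp p N) \<inter> V \<times> V" using u z uN zN cu by (simp add: mp_edge)
      moreover have "(z, w) \<in> edges (mp p N) \<inter> V \<times> V" using w z wN zN cu True by (simp add: mp_edge)
      ultimately have "(u, w) \<in> (edges (mp p N) \<inter> V \<times> V)\<^sup>*" by (meson converse_rtrancl_into_rtrancl r_into_rtrancl)
      then show ?thesis by simp
    qed
  qed
qed

lemma mp_conn: "2 \<le> p \<Longrightarrow> 1 \<le> N \<Longrightarrow> connected_graph (mp p N)"
proof -
  assume "2 \<le> p" "1 \<le> N"
  then have "connected_graph (induced (mp p N) (verts (mp p N) - {}))" using mp_conn_minus[of p "{}" N] by simp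
  moreover have "induced (mp p N) (verts (mp p N) - {}) = mp p N"
    unfolding induced_def mp_def by auto
  ultimately show ?thesis by simp
qed

lemma mp_kconn:
  assumes p: "2 \<le> p" and k: "k < N"
  shows "k_connected (mp p N) k"
  unfolding k_connected_def
proof (intro conjI allI impI)
  have "k < 1 * N" using k by simp
  also have "\<dots> \<le> p * N" using p by (intro mult_le_mono1) simp
  finally show "k < card (verts (mp p N))" unfolding mp_verts by simp
  show "connected_graph (mp p N)" using mp_conn[OF p] k by simp
  fix S assume "S \<subseteq> verts (mp p N) \<and> card S < k"
  then show "connected_graph (induced (mp p N) (verts (mp p N) - S))" using mp_conn_minus[OF p] k by auto
qed


definition compat :: "(nat \<Rightarrow> nat) \<Rightarrow> (nat \<Rightarrow> nat) \<Rightarrow> nat set \<Rightarrow> nat \<Rightarrow> nat \<Rightarrow> nat \<Rightarrow> bool" where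
  "compat s t F p1 p2 N \<longleftrightarrow> (\<forall>x\<in>F. s x < p1 * N \<and> t x < p2 * N) \<and>
     (\<forall>x\<in>F. \<forall>y\<in>F. (s x = s y \<longleftrightarrow> t x = t y) \<and> (s x mod p1 = s y mod p1 \<longleftrightarrow> t x mod p2 = t y mod p2))"

lemma compat_sym: "compat s t F p1 p2 N \<Longrightarrow> compat t s F p2 p1 N"
  unfolding compat_def by metis

lemma compat_mono: "compat s t F p1 p2 N \<Longrightarrow> F' \<subseteq> F \<Longrightarrow> compat s t F' p1 p2 N"
  unfolding compat_def by blast

lemma ext1:
  assumes c: "compat s t F p1 p2 N" and fin: "finite F" and x: "x \<notin> F"
    and cp: "card F < p2" and cN: "card F < N" and v: "v < p1 * N"
  shows "\<exists>w<p2 * N. compat (s(x:=v)) (t(x:=w)) (insert x F) p1 p2 N"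
proof -
  have p2: "0 < p2" using cp by simp
  have c1: "\<And>y. y \<in> F \<Longrightarrow> s y < p1 * N \<and> t y < p2 * N"
    and c2: "\<And>y z. y \<in> F \<Longrightarrow> z \<in> F \<Longrightarrow> (s y = s z \<longleftrightarrow> t y = t z) \<and> (s y mod p1 = s z mod p1 \<longleftrightarrow> t y mod p2 = t z mod p2)"
    using c unfolding compat_def by blast+
  have "\<exists>w. w < p2 * N \<and> (\<forall>y\<in>F. (v = s y \<longleftrightarrow> w = t y) \<and> (v mod p1 = s y mod p1 \<longleftrightarrow> w mod p2 = t y mod p2))"
  proof (cases "\<exists>y0\<in>F. s y0 = v")
    case True
    then obtain y0 where y0: "y0 \<in> F" "s y0 = v" by blast
    show ?thesis
    proof (intro exI conjI ballI)
      show "t y0 < p2 * N" using c1[OF y0(1)] by simp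
      fix y assume y: "y \<in> F"
      show "(v = s y) = (t y0 = t y)" using c2[OF y0(1) y] y0 by simp
      show "(v mod p1 = s y mod p1) = (t y0 mod p2 = t y mod p2)" using c2[OF y0(1) y] y0 by simp
    qed
  next
    case nE: False
    show ?thesis
    proof (cases "\<exists>y0\<in>F. s y0 mod p1 = v mod p1")
      case True
      then obtain y0 where y0: "y0 \<in> F" "s y0 mod p1 = v mod p1" by blast
      have "card (t ` F) < N" using cN card_image_le[OF fin, of t] by linarith
      then obtain w where w: "w < p2 * N" "w mod p2 = t y0 mod p2" "w \<notin> t ` F"
        using part_avoid[OF p2, of "t y0 mod p2" "t ` F" N] p2 fin by auto
      show ?thesis
      proof (intro exI conjI ballI)
        show "w < p2 * N" by (rule w(1))
        fix y assume y: "y \<in> F"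
        show "(v = s y) = (w = t y)" using nE w(3) y by auto
        show "(v mod p1 = s y mod p1) = (w mod p2 = t y mod p2)" using c2[OF y0(1) y] y0 w(2) by simp
      qed
    next
      case nP: False
      have "card ((\<lambda>y. t y mod p2) ` F) < p2" using cp card_image_le[OF fin, of "\<lambda>y. t y mod p2"] by linarith
      then have "\<not> {..<p2} \<subseteq> (\<lambda>y. t y mod p2) ` F"
        using card_mono[OF finite_imageI[OF fin]] by fastforce
      then obtain cc where cc: "cc < p2" "cc \<notin> (\<lambda>y. t y mod p2) ` F" by auto
      have "p2 * 1 \<le> p2 * N" using cN by (intro mult_le_mono2) simp
      then have ccN: "cc < p2 * N" using cc by linarith
      show ?thesis
      proof (intro exI conjI ballI)
        show "cc < p2 * N" by (rule ccN)
        fix y assume y: "y \<in> F"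
        have ne: "cc \<noteq> t y mod p2" using cc(2) y by auto
        show "(v = s y) = (cc = t y)" using nP y ne cc(1) by auto
        show "(v mod p1 = s y mod p1) = (cc mod p2 = t y mod p2)" using nP y ne cc(1) by auto
      qed
    qed
  qed
  then obtain w where w: "w < p2 * N" "\<And>y. y \<in> F \<Longrightarrow> (v = s y \<longleftrightarrow> w = t y) \<and> (v mod p1 = s y mod p1 \<longleftrightarrow> w mod p2 = t y mod p2)"
    by blast
  have A: "\<forall>y\<in>insert x F. (s(x := v)) y < p1 * N \<and> (t(x := w)) y < p2 * N" using c1 v w(1) x by auto
  have B: "\<forall>y\<in>insert x F. \<forall>z\<in>insert x F. ((s(x := v)) y = (s(x := v)) z \<longleftrightarrow> (t(x := w)) y = (t(x := w)) z) \<and>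
      ((s(x := v)) y mod p1 = (s(x := v)) z mod p1 \<longleftrightarrow> (t(x := w)) y mod p2 = (t(x := w)) z mod p2)"
  proof (intro ballI conjI)
    have w2: "\<And>y. y \<in> F \<Longrightarrow> (s y = v \<longleftrightarrow> t y = w) \<and> (s y mod p1 = v mod p1 \<longleftrightarrow> t y mod p2 = w mod p2)"
      using w(2) by metis
    fix y z assume y: "y \<in> insert x F" and z: "z \<in> insert x F"
    show "((s(x := v)) y = (s(x := v)) z) = ((t(x := w)) y = (t(x := w)) z)"
      using y z c2 w(2) w2 x by (cases "y = x"; cases "z = x") auto
    show "((s(x := v)) y mod p1 = (s(x := v)) z mod p1) = ((t(x := w)) y mod p2 = (t(x := w)) z mod p2)"
      using y z c2 w(2) w2 x by (cases "y = x"; cases "z = x") auto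
  qed
  have "compat (s(x:=v)) (t(x:=w)) (insert x F) p1 p2 N"
    unfolding compat_def using A B by blast
  then show ?thesis using w(1) by blast
qed

lemma quant_transfer:
  assumes H: "\<And>v w. compat (s(x:=v)) (t(x:=w)) (insert x F) p1 p2 N \<Longrightarrow> v < p1 * N \<Longrightarrow> w < p2 * N \<Longrightarrow> (A v \<longleftrightarrow> B w)"
    and c: "compat s t F p1 p2 N" and fin: "finite F" and x: "x \<notin> F"
    and c1: "card F < p1" and c2: "card F < p2" and cN: "card F < N"
  shows "(\<exists>v<p1 * N. A v) \<longleftrightarrow> (\<exists>w<p2 * N. B w)" and "(\<forall>v<p1 * N. A v) \<longleftrightarrow> (\<forall>w<p2 * N. B w)"
proof -
  have fw: "\<exists>w<p2 * N. compat (s(x:=v)) (t(x:=w)) (insert x F) p1 p2 N" if "v < p1 * N" for v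
    by (rule ext1[OF c fin x c2 cN that])
  have bw: "\<exists>v<p1 * N. compat (s(x:=v)) (t(x:=w)) (insert x F) p1 p2 N" if wl: "w < p2 * N" for w
  proof -
    obtain v where "v < p1 * N" "compat (t(x:=w)) (s(x:=v)) (insert x F) p2 p1 N"
      using ext1[OF compat_sym[OF c] fin x c1 cN wl] by blast
    then show ?thesis using compat_sym by blast
  qed
  show "(\<exists>v<p1 * N. A v) \<longleftrightarrow> (\<exists>w<p2 * N. B w)"
  proof
    assume "\<exists>v<p1 * N. A v"
    then obtain v where v: "v < p1 * N" "A v" by blast
    then obtain w where "w < p2 * N" "compat (s(x:=v)) (t(x:=w)) (insert x F) p1 p2 N" using fw by blast
    then show "\<exists>w<p2 * N. B w" using H v by blast
  next
    assume "\<exists>w<p2 * N. B w"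
    then obtain w where w: "w < p2 * N" "B w" by blast
    then obtain v where "v < p1 * N" "compat (s(x:=v)) (t(x:=w)) (insert x F) p1 p2 N" using bw by blast
    then show "\<exists>v<p1 * N. A v" using H w by blast
  qed
  show "(\<forall>v<p1 * N. A v) \<longleftrightarrow> (\<forall>w<p2 * N. B w)"
  proof
    assume a: "\<forall>v<p1 * N. A v"
    show "\<forall>w<p2 * N. B w"
    proof (intro allI impI)
      fix w assume w: "w < p2 * N"
      then obtain v where "v < p1 * N" "compat (s(x:=v)) (t(x:=w)) (insert x F) p1 p2 N" using bw by blast
      then show "B w" using H w a by blast
    qed
  next
    assume a: "\<forall>w<p2 * N. B w"
    show "\<forall>v<p1 * N. A v"
    proof (intro allI impI)
      fix v assume v: "v < p1 * N"
      then obtain w where "w < p2 * N" "compat (s(x:=v)) (t(x:=w)) (insert x F) p1 p2 N" using fw by blast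
      then show "A v" using H v a by blast
    qed
  qed
qed

lemma finite_free_vars: "finite (free_vars \<phi>)"
  by (induction \<phi>) auto

lemma finite_all_vars: "finite (all_vars \<phi>)"
  by (induction \<phi>) auto

lemma free_sub_all: "free_vars \<phi> \<subseteq> all_vars \<phi>"
  by (induction \<phi>) auto

lemma sat_mp_Ex: "sat (mp p N) s (Ex x \<phi>) \<longleftrightarrow> (\<exists>v<p * N. sat (mp p N) (s(x:=v)) \<phi>)"
  by (simp add: mp_verts Bex_def)
lemma sat_mp_All: "sat (mp p N) s (All x \<phi>) \<longleftrightarrow> (\<forall>v<p * N. sat (mp p N) (s(x:=v)) \<phi>)"
  by (simp add: mp_verts Ball_def)

lemma ef_depth:
  assumes q1: "q \<le> p1" and q2: "q \<le> p2" and qN: "q \<le> N"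
  shows "compat s t (free_vars \<phi>) p1 p2 N \<Longrightarrow> card (free_vars \<phi>) + qdepth \<phi> \<le> q \<Longrightarrow>
    sat (mp p1 N) s \<phi> \<longleftrightarrow> sat (mp p2 N) t \<phi>"
proof (induction \<phi> arbitrary: s t)
  case (Adj x y)
  then show ?case unfolding compat_def by (simp add: mp_edge)
next
  case (Eq x y)
  then show ?case unfolding compat_def by simp
next
  case (Neg \<phi>)
  then show ?case by simp
next
  case (Conj \<phi>1 \<phi>2)
  have f1: "card (free_vars \<phi>1) \<le> card (free_vars (Conj \<phi>1 \<phi>2))" "card (free_vars \<phi>2) \<le> card (free_vars (Conj \<phi>1 \<phi>2))"
    using finite_free_vars[of "Conj \<phi>1 \<phi>2"] by (auto intro: card_mono)
  have "sat (mp p1 N) s \<phi>1 \<longleftrightarrow> sat (mp p2 N) t \<phi>1"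
    using Conj.IH(1)[of s t] Conj.prems compat_mono f1 by force
  moreover have "sat (mp p1 N) s \<phi>2 \<longleftrightarrow> sat (mp p2 N) t \<phi>2"
    using Conj.IH(2)[of s t] Conj.prems compat_mono f1 by force
  ultimately show ?case by simp
next
  case (Disj \<phi>1 \<phi>2)
  have f1: "card (free_vars \<phi>1) \<le> card (free_vars (Disj \<phi>1 \<phi>2))" "card (free_vars \<phi>2) \<le> card (free_vars (Disj \<phi>1 \<phi>2))"
    using finite_free_vars[of "Disj \<phi>1 \<phi>2"] by (auto intro: card_mono)
  have "sat (mp p1 N) s \<phi>1 \<longleftrightarrow> sat (mp p2 N) t \<phi>1"
    using Disj.IH(1)[of s t] Disj.prems compat_mono f1 by force
  moreover have "sat (mp p1 N) s \<phi>2 \<longleftrightarrow> sat (mp p2 N) t \<phi>2"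
    using Disj.IH(2)[of s t] Disj.prems compat_mono f1 by force
  ultimately show ?case by simp
next
  case (Ex x \<phi>)
  define F where "F = free_vars \<phi> - {x}"
  have fF: "free_vars (Ex x \<phi>) = F" unfolding F_def by simp
  have finF: "finite F" unfolding F_def using finite_free_vars by blast
  have xF: "x \<notin> F" unfolding F_def by simp
  have cF: "card F + Suc (qdepth \<phi>) \<le> q" using Ex.prems(2) fF by simp
  have H: "sat (mp p1 N) (s(x:=v)) \<phi> \<longleftrightarrow> sat (mp p2 N) (t(x:=w)) \<phi>"
    if "compat (s(x:=v)) (t(x:=w)) (insert x F) p1 p2 N" for v w
  proof (rule Ex.IH)
    show "compat (s(x:=v)) (t(x:=w)) (free_vars \<phi>) p1 p2 N"
      using compat_mono[OF that] unfolding F_def by blast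
    have "card (free_vars \<phi>) \<le> card (insert x F)"
      using finF unfolding F_def by (intro card_mono) auto
    also have "\<dots> \<le> card F + 1" using finF by (simp add: card_insert_if)
    finally show "card (free_vars \<phi>) + qdepth \<phi> \<le> q" using cF by simp
  qed
  have "(\<exists>v<p1 * N. sat (mp p1 N) (s(x:=v)) \<phi>) \<longleftrightarrow> (\<exists>w<p2 * N. sat (mp p2 N) (t(x:=w)) \<phi>)"
    by (rule quant_transfer(1)[OF H]) (use Ex.prems fF finF xF cF q1 q2 qN in auto)
  then show ?case unfolding sat_mp_Ex .
next
  case (All x \<phi>)
  define F where "F = free_vars \<phi> - {x}"
  have fF: "free_vars (All x \<phi>) = F" unfolding F_def by simp
  have finF: "finite F" unfolding F_def using finite_free_vars by blast
  have xF: "x \<notin> F" unfolding F_def by simp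
  have cF: "card F + Suc (qdepth \<phi>) \<le> q" using All.prems(2) fF by simp
  have H: "sat (mp p1 N) (s(x:=v)) \<phi> \<longleftrightarrow> sat (mp p2 N) (t(x:=w)) \<phi>"
    if "compat (s(x:=v)) (t(x:=w)) (insert x F) p1 p2 N" for v w
  proof (rule All.IH)
    show "compat (s(x:=v)) (t(x:=w)) (free_vars \<phi>) p1 p2 N"
      using compat_mono[OF that] unfolding F_def by blast
    have "card (free_vars \<phi>) \<le> card (insert x F)"
      using finF unfolding F_def by (intro card_mono) auto
    also have "\<dots> \<le> card F + 1" using finF by (simp add: card_insert_if)
    finally show "card (free_vars \<phi>) + qdepth \<phi> \<le> q" using cF by simp
  qed
  have "(\<forall>v<p1 * N. sat (mp p1 N) (s(x:=v)) \<phi>) \<longleftrightarrow> (\<forall>w<p2 * N. sat (mp p2 N) (t(x:=w)) \<phi>)"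
    by (rule quant_transfer(2)[OF H]) (use All.prems fF finF xF cF q1 q2 qN in auto)
  then show ?case unfolding sat_mp_All .
qed

lemma ef_width:
  assumes q1: "q \<le> p1" and q2: "q \<le> p2" and qN: "q \<le> N"
  shows "compat s t (all_vars \<phi>) p1 p2 N \<Longrightarrow> card (all_vars \<phi>) \<le> q \<Longrightarrow>
    sat (mp p1 N) s \<phi> \<longleftrightarrow> sat (mp p2 N) t \<phi>"
proof (induction \<phi> arbitrary: s t)
  case (Adj x y)
  then show ?case unfolding compat_def by (simp add: mp_edge)
next
  case (Eq x y)
  then show ?case unfolding compat_def by simp
next
  case (Neg \<phi>)
  then show ?case by simp
next
  case (Conj \<phi>1 \<phi>2)
  have f1: "card (all_vars \<phi>1) \<le> card (all_vars (Conj \<phi>1 \<phi>2))" "card (all_vars \<phi>2) \<le> card (all_vars (Conj \<phi>1 \<phi>2))"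
    using finite_all_vars[of "Conj \<phi>1 \<phi>2"] by (auto intro: card_mono)
  have "sat (mp p1 N) s \<phi>1 \<longleftrightarrow> sat (mp p2 N) t \<phi>1"
    using Conj.IH(1)[of s t] Conj.prems compat_mono f1 by force
  moreover have "sat (mp p1 N) s \<phi>2 \<longleftrightarrow> sat (mp p2 N) t \<phi>2"
    using Conj.IH(2)[of s t] Conj.prems compat_mono f1 by force
  ultimately show ?case by simp
next
  case (Disj \<phi>1 \<phi>2)
  have f1: "card (all_vars \<phi>1) \<le> card (all_vars (Disj \<phi>1 \<phi>2))" "card (all_vars \<phi>2) \<le> card (all_vars (Disj \<phi>1 \<phi>2))"
    using finite_all_vars[of "Disj \<phi>1 \<phi>2"] by (auto intro: card_mono)
  have "sat (mp p1 N) s \<phi>1 \<longleftrightarrow> sat (mp p2 N) t \<phi>1"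
    using Disj.IH(1)[of s t] Disj.prems compat_mono f1 by force
  moreover have "sat (mp p1 N) s \<phi>2 \<longleftrightarrow> sat (mp p2 N) t \<phi>2"
    using Disj.IH(2)[of s t] Disj.prems compat_mono f1 by force
  ultimately show ?case by simp
next
  case (Ex x \<phi>)
  define F where "F = all_vars \<phi> - {x}"
  have fF: "all_vars (Ex x \<phi>) = insert x F" unfolding F_def by auto
  have finF: "finite F" unfolding F_def using finite_all_vars by blast
  have xF: "x \<notin> F" unfolding F_def by simp
  have cF: "card F + 1 \<le> q" using Ex.prems(2) fF finF xF by simp
  have H: "sat (mp p1 N) (s(x:=v)) \<phi> \<longleftrightarrow> sat (mp p2 N) (t(x:=w)) \<phi>"
    if "compat (s(x:=v)) (t(x:=w)) (insert x F) p1 p2 N" for v w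
  proof (rule Ex.IH)
    show "compat (s(x:=v)) (t(x:=w)) (all_vars \<phi>) p1 p2 N"
      using compat_mono[OF that] unfolding F_def by blast
    have "card (all_vars \<phi>) \<le> card (insert x F)"
      using finF unfolding F_def by (intro card_mono) auto
    then show "card (all_vars \<phi>) \<le> q" using Ex.prems(2) fF by simp
  qed
  have c0: "compat s t F p1 p2 N" using compat_mono[OF Ex.prems(1)] fF by blast
  have "(\<exists>v<p1 * N. sat (mp p1 N) (s(x:=v)) \<phi>) \<longleftrightarrow> (\<exists>w<p2 * N. sat (mp p2 N) (t(x:=w)) \<phi>)"
    by (rule quant_transfer(1)[OF H c0 finF xF]) (use cF q1 q2 qN in auto)
  then show ?case unfolding sat_mp_Ex .
next
  case (All x \<phi>)
  define F where "F = all_vars \<phi> - {x}"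
  have fF: "all_vars (All x \<phi>) = insert x F" unfolding F_def by auto
  have finF: "finite F" unfolding F_def using finite_all_vars by blast
  have xF: "x \<notin> F" unfolding F_def by simp
  have cF: "card F + 1 \<le> q" using All.prems(2) fF finF xF by simp
  have H: "sat (mp p1 N) (s(x:=v)) \<phi> \<longleftrightarrow> sat (mp p2 N) (t(x:=w)) \<phi>"
    if "compat (s(x:=v)) (t(x:=w)) (insert x F) p1 p2 N" for v w
  proof (rule All.IH)
    show "compat (s(x:=v)) (t(x:=w)) (all_vars \<phi>) p1 p2 N"
      using compat_mono[OF that] unfolding F_def by blast
    have "card (all_vars \<phi>) \<le> card (insert x F)"
      using finF unfolding F_def by (intro card_mono) auto
    then show "card (all_vars \<phi>) \<le> q" using All.prems(2) fF by simp
  qed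
  have c0: "compat s t F p1 p2 N" using compat_mono[OF All.prems(1)] fF by blast
  have "(\<forall>v<p1 * N. sat (mp p1 N) (s(x:=v)) \<phi>) \<longleftrightarrow> (\<forall>w<p2 * N. sat (mp p2 N) (t(x:=w)) \<phi>)"
    by (rule quant_transfer(2)[OF H c0 finF xF]) (use cF q1 q2 qN in auto)
  then show ?case unfolding sat_mp_All .
qed

lemma sat_agree: "(\<forall>x\<in>free_vars \<phi>. s x = s' x) \<Longrightarrow> sat G s \<phi> \<longleftrightarrow> sat G s' \<phi>"
proof (induction \<phi> arbitrary: s s')
  case (Adj x y) then show ?case by simp
next
  case (Eq x y) then show ?case by simp
next
  case (Neg \<phi>) then show ?case by simp
next
  case (Conj \<phi>1 \<phi>2)
  have "sat G s \<phi>1 \<longleftrightarrow> sat G s' \<phi>1" using Conj.IH(1)[of s s'] Conj.prems by simp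
  moreover have "sat G s \<phi>2 \<longleftrightarrow> sat G s' \<phi>2" using Conj.IH(2)[of s s'] Conj.prems by simp
  ultimately show ?case by simp
next
  case (Disj \<phi>1 \<phi>2)
  have "sat G s \<phi>1 \<longleftrightarrow> sat G s' \<phi>1" using Disj.IH(1)[of s s'] Disj.prems by simp
  moreover have "sat G s \<phi>2 \<longleftrightarrow> sat G s' \<phi>2" using Disj.IH(2)[of s s'] Disj.prems by simp
  ultimately show ?case by simp
next
  case (Ex x \<phi>)
  have "\<And>v. sat G (s(x:=v)) \<phi> \<longleftrightarrow> sat G (s'(x:=v)) \<phi>"
  proof -
    fix v
    have "\<forall>y\<in>free_vars \<phi>. (s(x:=v)) y = (s'(x:=v)) y" using Ex.prems by simp
    then show "sat G (s(x:=v)) \<phi> \<longleftrightarrow> sat G (s'(x:=v)) \<phi>" by (rule Ex.IH)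
  qed
  then show ?case by simp
next
  case (All x \<phi>)
  have "\<And>v. sat G (s(x:=v)) \<phi> \<longleftrightarrow> sat G (s'(x:=v)) \<phi>"
  proof -
    fix v
    have "\<forall>y\<in>free_vars \<phi>. (s(x:=v)) y = (s'(x:=v)) y" using All.prems by simp
    then show "sat G (s(x:=v)) \<phi> \<longleftrightarrow> sat G (s'(x:=v)) \<phi>" by (rule All.IH)
  qed
  then show ?case by simp
qed



fun adjto :: "nat \<Rightarrow> nat \<Rightarrow> fo" where
  "adjto 0 k = Eq k k"
| "adjto (Suc i) k = Conj (Adj i k) (adjto i k)"

primrec clr :: "nat \<Rightarrow> nat \<Rightarrow> fo" where
  "clr 0 k = Eq 0 0"
| "clr (Suc n) k = Ex k (Conj (adjto k k) (clr n (Suc k)))"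

lemma sat_adjto: "sat G s (adjto i k) \<longleftrightarrow> (\<forall>j<i. (s j, s k) \<in> edges G)"
  by (induction i) (auto simp: less_Suc_eq)

lemma qdepth_adjto: "qdepth (adjto i k) = 0" by (induction i) auto
lemma qdepth_clr: "qdepth (clr n k) = n" by (induction n arbitrary: k) (auto simp: qdepth_adjto)

lemma free_adjto: "free_vars (adjto i k) \<subseteq> insert k {..<i}" by (induction i) auto
lemma all_adjto: "all_vars (adjto i k) \<subseteq> insert k {..<i}" by (induction i) auto

lemma free_clr: "free_vars (clr n k) \<subseteq> insert 0 {..<k}"
proof (induction n arbitrary: k)
  case 0 then show ?case by simp
next
  case (Suc n)
  have "free_vars (clr (Suc n) k) = (free_vars (adjto k k) \<union> free_vars (clr n (Suc k))) - {k}" by simp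
  also have "\<dots> \<subseteq> (insert k {..<k} \<union> insert 0 {..<Suc k}) - {k}" using free_adjto Suc.IH by blast
  also have "\<dots> \<subseteq> insert 0 {..<k}" by auto
  finally show ?case .
qed

lemma sentence_clr: "sentence (clr (Suc n) 0)"
proof -
  have "free_vars (clr (Suc n) 0) = (free_vars (adjto 0 0) \<union> free_vars (clr n 1)) - {0}" by simp
  also have "\<dots> \<subseteq> (insert 0 {..<0} \<union> insert 0 {..<1}) - {0}" using free_adjto free_clr by blast
  also have "\<dots> = {}" by auto
  finally show ?thesis unfolding sentence_def by blast
qed

lemma all_clr: "all_vars (clr n k) \<subseteq> insert 0 {..<k + n}"
proof (induction n arbitrary: k)
  case 0 then show ?case by simp
next
  case (Suc n)
  have "all_vars (clr (Suc n) k) = insert k (all_vars (adjto k k) \<union> all_vars (clr n (Suc k)))" by simp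
  also have "\<dots> \<subseteq> insert k (insert k {..<k} \<union> insert 0 {..<Suc k + n})" using all_adjto Suc.IH by blast
  also have "\<dots> \<subseteq> insert 0 {..<k + Suc n}" by auto
  finally show ?case .
qed

lemma width_clr: "1 \<le> a \<Longrightarrow> var_width (clr a 0) \<le> a"
proof -
  assume a: "1 \<le> a"
  have "all_vars (clr a 0) \<subseteq> {..<a}" using all_clr[of a 0] a by auto
  then have "card (all_vars (clr a 0)) \<le> card {..<a}" by (intro card_mono) auto
  then show ?thesis unfolding var_width_def by simp
qed

lemma sat_clr: "sat G s (clr n k) \<longleftrightarrow> (\<exists>g. (\<forall>i. k \<le> i \<and> i < k + n \<longrightarrow> g i \<in> verts G) \<and> (\<forall>i<k. g i = s i)
     \<and> (\<forall>j. k \<le> j \<and> j < k + n \<longrightarrow> (\<forall>i<j. (g i, g j) \<in> edges G)))"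
proof (induction n arbitrary: k s)
  case 0
  show ?case by (auto intro: exI[of _ s])
next
  case (Suc n)
  have L: "sat G s (clr (Suc n) k) \<longleftrightarrow> (\<exists>v\<in>verts G. (\<forall>j<k. (s j, v) \<in> edges G) \<and> sat G (s(k:=v)) (clr n (Suc k)))"
    by (simp add: sat_adjto)
  show ?case
  proof
    assume "sat G s (clr (Suc n) k)"
    then obtain v where v: "v \<in> verts G" "\<forall>j<k. (s j, v) \<in> edges G" "sat G (s(k:=v)) (clr n (Suc k))"
      using L by blast
    then obtain g where g: "\<forall>i. Suc k \<le> i \<and> i < Suc k + n \<longrightarrow> g i \<in> verts G" "\<forall>i<Suc k. g i = (s(k:=v)) i"
      "\<forall>j. Suc k \<le> j \<and> j < Suc k + n \<longrightarrow> (\<forall>i<j. (g i, g j) \<in> edges G)"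
      using Suc.IH by blast
    have gk: "g k = v" using g(2) by simp
    have gi: "\<And>i. i < k \<Longrightarrow> g i = s i" using g(2) by simp
    show "\<exists>g. (\<forall>i. k \<le> i \<and> i < k + Suc n \<longrightarrow> g i \<in> verts G) \<and> (\<forall>i<k. g i = s i)
     \<and> (\<forall>j. k \<le> j \<and> j < k + Suc n \<longrightarrow> (\<forall>i<j. (g i, g j) \<in> edges G))"
    proof (intro exI conjI allI impI)
      fix i assume "k \<le> i \<and> i < k + Suc n"
      then show "g i \<in> verts G" using g(1) gk v(1) by (cases "i = k") auto
    next
      fix i assume "i < k" then show "g i = s i" by (rule gi)
    next
      fix j i assume j: "k \<le> j \<and> j < k + Suc n" and i: "i < j"
      show "(g i, g j) \<in> edges G"
      proof (cases "j = k")
        case True then show ?thesis using i gi gk v(2) by auto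
      next
        case False then show ?thesis using g(3) j i by auto
      qed
    qed
  next
    assume "\<exists>g. (\<forall>i. k \<le> i \<and> i < k + Suc n \<longrightarrow> g i \<in> verts G) \<and> (\<forall>i<k. g i = s i)
     \<and> (\<forall>j. k \<le> j \<and> j < k + Suc n \<longrightarrow> (\<forall>i<j. (g i, g j) \<in> edges G))"
    then obtain g where g: "\<forall>i. k \<le> i \<and> i < k + Suc n \<longrightarrow> g i \<in> verts G" "\<forall>i<k. g i = s i"
      "\<forall>j. k \<le> j \<and> j < k + Suc n \<longrightarrow> (\<forall>i<j. (g i, g j) \<in> edges G)" by blast
    have "g k \<in> verts G" using g(1) by simp
    moreover have "\<forall>j<k. (s j, g k) \<in> edges G" using g(2) g(3) by auto
    moreover have "sat G (s(k:=g k)) (clr n (Suc k))"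
    proof -
      have "(\<forall>i. Suc k \<le> i \<and> i < Suc k + n \<longrightarrow> g i \<in> verts G) \<and> (\<forall>i<Suc k. g i = (s(k:=g k)) i)
       \<and> (\<forall>j. Suc k \<le> j \<and> j < Suc k + n \<longrightarrow> (\<forall>i<j. (g i, g j) \<in> edges G))"
        using g by (auto simp: less_Suc_eq)
      then show ?thesis using Suc.IH by blast
    qed
    ultimately show "sat G s (clr (Suc n) k)" using L by blast
  qed
qed

lemma models_clr:
  assumes wf: "wf_graph G"
  shows "models G (clr a 0) \<longleftrightarrow> (\<exists>g. (\<forall>i<a. g i \<in> verts G) \<and> (\<forall>i<a. \<forall>j<a. i \<noteq> j \<longrightarrow> (g i, g j) \<in> edges G))"
proof -
  have sym: "\<And>x y. (x,y) \<in> edges G \<Longrightarrow> (y,x) \<in> edges G" using wf unfolding wf_graph_def by blast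
  have eq: "\<And>g. (\<forall>j. 0 \<le> j \<and> j < 0 + a \<longrightarrow> (\<forall>i<j. (g i, g j) \<in> edges G)) \<longleftrightarrow> (\<forall>i<a. \<forall>j<a. i \<noteq> j \<longrightarrow> (g i, g j) \<in> edges G)"
  proof
    fix g assume h: "\<forall>j. 0 \<le> j \<and> j < 0 + a \<longrightarrow> (\<forall>i<j. (g i, g j) \<in> edges G)"
    show "\<forall>i<a. \<forall>j<a. i \<noteq> j \<longrightarrow> (g i, g j) \<in> edges G"
    proof (intro allI impI)
      fix i j assume "i < a" "j < a" "i \<noteq> j"
      then show "(g i, g j) \<in> edges G" using h sym by (cases "i < j") (auto simp: not_less)
    qed
  next
    fix g assume "\<forall>i<a. \<forall>j<a. i \<noteq> j \<longrightarrow> (g i, g j) \<in> edges G"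
    then show "\<forall>j. 0 \<le> j \<and> j < 0 + a \<longrightarrow> (\<forall>i<j. (g i, g j) \<in> edges G)" by auto
  qed
  have "\<And>s. sat G s (clr a 0) \<longleftrightarrow> (\<exists>g. (\<forall>i<a. g i \<in> verts G) \<and> (\<forall>i<a. \<forall>j<a. i \<noteq> j \<longrightarrow> (g i, g j) \<in> edges G))"
    unfolding sat_clr using eq by auto
  then show ?thesis unfolding models_def by blast
qed


lemma tw_lower_sub:
  assumes wf: "wf_graph G" and S: "S \<subseteq> verts G" "S \<noteq> {}"
    and deg: "\<And>v. v \<in> S \<Longrightarrow> \<delta> \<le> card {u. (v,u) \<in> edges (induced G S)}"
  shows "\<delta> \<le> treewidth G"
proof -
  have fin: "finite (verts G)" using wf unfolding wf_graph_def by auto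
  obtain T X where td: "tree_decomposition G T X" and w: "td_width T X = treewidth G"
    using treewidth_witness[OF wf] by blast
  have td': "tree_decomposition (induced G S) T (\<lambda>i. X i \<inter> S)" by (rule td_restrict[OF td])
  have vS: "verts (induced G S) = S" using S(1) unfolding induced_def by auto
  have ne: "verts (induced G S) \<noteq> {}" using vS S(2) by simp
  have dg: "\<And>v. v \<in> verts (induced G S) \<Longrightarrow> \<delta> \<le> card {u. (v,u) \<in> edges (induced G S)}" using deg vS by simp
  obtain i where i: "i \<in> verts T" "\<delta> + 1 \<le> card (X i \<inter> S)"
    using mindeg_bag[OF wf_induced[OF wf] ne dg td'] by blast
  have finT: "finite (verts T)" using td unfolding tree_decomposition_def is_tree_def wf_graph_def by auto
  have "X i \<subseteq> verts G" using td i(1) unfolding tree_decomposition_def by auto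
  then have "card (X i \<inter> S) \<le> card (X i)" using fin by (intro card_mono) (auto intro: finite_subset)
  moreover have "card (X i) \<le> Max ((\<lambda>i. card (X i)) ` verts T)" using i finT by auto
  ultimately show ?thesis using w i unfolding td_width_def by linarith
qed

lemma lolli_tw_lower:
  assumes a: "2 \<le> a"
  shows "a - 1 \<le> treewidth (lollipop a b)"
proof (rule tw_lower_sub[OF lolli_wf, of "{0..<a}"])
  show "{0..<a} \<subseteq> verts (lollipop a b)" unfolding lolli_verts by auto
  show "{0..<a} \<noteq> {}" using a by auto
  fix v assume v: "v \<in> {0..<a}"
  have "{u. (v,u) \<in> edges (induced (lollipop a b) {0..<a})} = {0..<a} - {v}"
    using v unfolding induced_def lolli_verts by (auto simp: lolli_edge)
  then show "a - 1 \<le> card {u. (v,u) \<in> edges (induced (lollipop a b) {0..<a})}" using v by simp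
qed

lemma lolli_tw_upper:
  assumes a: "2 \<le> a"
  shows "treewidth (lollipop a b) \<le> a - 1"
proof -
  define X where "X t = (if t = 0 then {0..<a} else {a + t - 2, a + t - 1})" for t
  define tp where "tp v = (if v < a then 0 else v - (a - 1))" for v
  have td: "tree_decomposition (lollipop a b) (rtree {0..b} 0 (\<lambda>i. i - 1)) X"
  proof (rule rooted_td[where dep = id and tp = tp])
    show "finite {0..b}" by simp
    show "0 \<in> {0..b}" by simp
    show "\<And>i. i \<in> {0..b} - {0} \<Longrightarrow> i - 1 \<in> {0..b} \<and> id (i - 1) < id i" by auto
    show "\<And>i. i \<in> {0..b} \<Longrightarrow> X i \<subseteq> verts (lollipop a b)"
      unfolding X_def lolli_verts using a by auto
    show "\<And>u v. (u, v) \<in> edges (lollipop a b) \<Longrightarrow> \<exists>i\<in>{0..b}. u \<in> X i \<and> v \<in> X i"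
    proof -
      fix u v assume "(u, v) \<in> edges (lollipop a b)"
      then have uv: "u < a + b" "v < a + b" "(u < a \<and> v < a \<and> u \<noteq> v) \<or> (min u v \<ge> a - 1 \<and> (u = v + 1 \<or> v = u + 1))"
        unfolding lolli_edge by auto
      show "\<exists>i\<in>{0..b}. u \<in> X i \<and> v \<in> X i"
      proof (cases "u < a \<and> v < a")
        case True then show ?thesis unfolding X_def by (intro bexI[of _ 0]) auto
      next
        case False
        define m where "m = min u v"
        have m: "m \<ge> a - 1" "m + 1 < a + b" "{u, v} = {m, m + 1}" using uv False unfolding m_def by auto
        define t where "t = m + 2 - a"
        have t: "t \<ge> 1" "t \<le> b" "a + t - 2 = m" "a + t - 1 = m + 1" using m a unfolding t_def by auto
        then have "X t = {m, m + 1}" unfolding X_def by auto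
        then show ?thesis using t m(3) by (intro bexI[of _ t]) auto
      qed
    qed
    show "\<And>v. v \<in> verts (lollipop a b) \<Longrightarrow> tp v \<in> {0..b} \<and> v \<in> X (tp v)"
    proof -
      fix v assume "v \<in> verts (lollipop a b)"
      then have v: "v < a + b" unfolding lolli_verts by auto
      show "tp v \<in> {0..b} \<and> v \<in> X (tp v)"
      proof (cases "v < a")
        case True then show ?thesis unfolding tp_def X_def by auto
      next
        case False
        then have "tp v = v - (a - 1)" "v - (a - 1) \<ge> 1" "v - (a - 1) \<le> b" using v a unfolding tp_def by auto
        moreover have "a + (v - (a - 1)) - 1 = v" using False a by auto
        ultimately show ?thesis unfolding X_def by auto
      qed
    qed
    show "\<And>v i. v \<in> verts (lollipop a b) \<Longrightarrow> i \<in> {0..b} \<Longrightarrow> v \<in> X i \<Longrightarrow> i \<noteq> tp v \<Longrightarrow> i \<noteq> 0 \<and> v \<in> X (i - 1)"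
    proof -
      fix v i assume v: "v \<in> verts (lollipop a b)" and i: "i \<in> {0..b}" and vi: "v \<in> X i" and nt: "i \<noteq> tp v"
      have i0: "i \<noteq> 0"
      proof
        assume "i = 0" then have "v < a" using vi unfolding X_def by auto
        then show False using nt \<open>i = 0\<close> unfolding tp_def by auto
      qed
      then have "v = a + i - 2 \<or> v = a + i - 1" using vi unfolding X_def by auto
      moreover have "v \<noteq> a + i - 1"
      proof
        assume "v = a + i - 1"
        then have "tp v = i" using i0 a unfolding tp_def by auto
        then show False using nt by simp
      qed
      ultimately have vv: "v = a + i - 2" by blast
      have "v \<in> X (i - 1)"
      proof (cases "i = 1")
        case True then show ?thesis using vv a unfolding X_def by auto
      next
        case False then have "a + (i - 1) - 1 = v" using vv i0 a by auto
        then show ?thesis using False i0 unfolding X_def by auto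
      qed
      then show "i \<noteq> 0 \<and> v \<in> X (i - 1)" using i0 by simp
    qed
  qed
  have tw1: "treewidth (lollipop a b) \<le> td_width (rtree {0..b} 0 (\<lambda>i. i - 1)) X" by (rule treewidth_le[OF td])
  have m: "Max ((\<lambda>i. card (X i)) ` {0..b}) \<le> a"
  proof (subst Max_le_iff)
    show "finite ((\<lambda>i. card (X i)) ` {0..b})" by simp
    show "(\<lambda>i. card (X i)) ` {0..b} \<noteq> {}" by simp
    show "\<forall>c\<in>(\<lambda>i. card (X i)) ` {0..b}. c \<le> a"
    proof
      fix c assume "c \<in> (\<lambda>i. card (X i)) ` {0..b}"
      then obtain i where c: "c = card (X i)" by auto
      show "c \<le> a"
      proof (cases "i = 0")
        case True then show ?thesis using c unfolding X_def by simp
      next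
        case False
        then have "card (X i) \<le> 2" unfolding X_def by (simp add: card_insert_le_m1)
        then show ?thesis using c a by simp
      qed
    qed
  qed
  have tdw: "td_width (rtree {0..b} 0 (\<lambda>i. i - 1)) X = Max ((\<lambda>i. card (X i)) ` {0..b}) - 1"
    unfolding td_width_def rtree_def by simp
  have "Max ((\<lambda>i. card (X i)) ` {0..b}) - 1 \<le> a - 1" using m by (rule diff_le_mono)
  then show ?thesis using tw1 tdw by linarith
qed

lemma lolli_tw: "2 \<le> a \<Longrightarrow> treewidth (lollipop a b) = a - 1"
  using lolli_tw_lower lolli_tw_upper by (metis le_antisym)


lemma divmod_small: "(r::nat) < a \<Longrightarrow> (r + a * q) div a = q \<and> (r + a * q) mod a = r"
  by simp

lemma mp_contains:
  assumes a: "2 \<le> a" and N: "b + 1 \<le> N"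
  shows "contains_subgraph (mp a N) (lollipop a b)"
proof -
  define pv where "pv t = (t mod 2) * (a - 1) + a * (t + 1)" for t
  define vs where "vs = map pv [0..<b]"
  have rlt: "\<And>t. (t mod 2) * (a - 1) < a" using a by (case_tac "t mod 2 = 0") auto
  have pvd: "\<And>t. pv t div a = t + 1" and pvm: "\<And>t. pv t mod a = (t mod 2) * (a - 1)"
    unfolding pv_def using divmod_small[OF rlt] by blast+
  have pvl: "pv t < a * N" if "t < b" for t
  proof -
    have "pv t < a + a * (t + 1)" unfolding pv_def using rlt[of t] by simp
    also have "\<dots> = a * (t + 2)" by (simp add: algebra_simps)
    also have "\<dots> \<le> a * N" using that N by (intro mult_le_mono2) simp
    finally show ?thesis .
  qed
  have pvg: "a \<le> pv t" for t unfolding pv_def by simp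
  have aN: "a \<le> a * N" using N by simp
  have sym: "\<And>x y. (x,y) \<in> edges (mp a N) \<Longrightarrow> (y,x) \<in> edges (mp a N)" using mp_wf unfolding wf_graph_def by blast
  show ?thesis
  proof (rule lolli_embed[OF mp_wf, where a=a and h="\<lambda>i. i" and vs=vs])
    show "1 \<le> a" using a by simp
    show "\<And>i. i < a \<Longrightarrow> i \<in> verts (mp a N)"
    proof -
      fix i assume "i < a" then have "i < a * N" using aN by linarith
      then show "i \<in> verts (mp a N)" unfolding mp_verts by simp
    qed
    show "\<And>i j. i < a \<Longrightarrow> j < a \<Longrightarrow> i \<noteq> j \<Longrightarrow> (i, j) \<in> edges (mp a N)"
    proof -
      fix i j assume ij: "i < a" "j < a" "i \<noteq> j"
      then have "i < a * N" "j < a * N" using aN by linarith+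
      then show "(i, j) \<in> edges (mp a N)" using ij unfolding mp_edge by simp
    qed
    show "length vs = b" unfolding vs_def by simp
    show "distinct vs" unfolding vs_def
    proof (rule distinct_map[THEN iffD2], intro conjI)
      show "distinct [0..<b]" by simp
      show "inj_on pv (set [0..<b])" unfolding inj_on_def using pvd by (metis add_right_cancel)
    qed
    show "set vs \<subseteq> verts (mp a N)" unfolding vs_def mp_verts using pvl by auto
    show "\<And>i. i < a \<Longrightarrow> i \<notin> set vs"
    proof
      fix i assume ia: "i < a" and "i \<in> set vs"
      then obtain t where "i = pv t" unfolding vs_def by auto
      then show False using pvg[of t] ia by simp
    qed
    show "vs \<noteq> [] \<Longrightarrow> (a - 1, vs ! 0) \<in> edges (mp a N)"
    proof -
      assume "vs \<noteq> []"
      then have b0: "0 < b" unfolding vs_def by simp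
      have "vs ! 0 = pv 0" unfolding vs_def using b0 by simp
      moreover have "pv 0 mod a = 0" using pvm[of 0] by simp
      moreover have "(a - 1) mod a = a - 1" using a by simp
      moreover have "pv 0 < a * N" using pvl b0 by simp
      moreover have "a - 1 < a * N" using aN a by linarith
      ultimately show ?thesis unfolding mp_edge using a by simp
    qed
    show "\<And>k. k + 1 < b \<Longrightarrow> (vs ! k, vs ! (k + 1)) \<in> edges (mp a N)"
    proof -
      fix k assume k: "k + 1 < b"
      have e: "vs ! k = pv k" "vs ! (k + 1) = pv (k + 1)" unfolding vs_def using k by auto
      have "(k mod 2) * (a - 1) \<noteq> ((k + 1) mod 2) * (a - 1)" using a by (cases "k mod 2 = 0") (auto simp: mod_Suc)
      then have "pv k mod a \<noteq> pv (k + 1) mod a" using pvm by simp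
      moreover have "pv k < a * N" "pv (k + 1) < a * N" using pvl k by auto
      ultimately show "(vs ! k, vs ! (k + 1)) \<in> edges (mp a N)" unfolding e mp_edge by simp
    qed
  qed
qed

lemma mp_no_lolli:
  assumes p: "1 \<le> p"
  shows "\<not> contains_subgraph (mp p N) (lollipop (p + 1) b)"
proof
  assume "contains_subgraph (mp p N) (lollipop (p + 1) b)"
  then obtain h where h: "\<forall>i<p+1. h i \<in> verts (mp p N)" "\<forall>i<p+1. \<forall>j<p+1. i \<noteq> j \<longrightarrow> (h i, h j) \<in> edges (mp p N)"
    using lolli_clique by blast
  have "inj_on (\<lambda>i. h i mod p) {..<p+1}"
    unfolding inj_on_def using h(2) unfolding mp_edge by auto
  moreover have "(\<lambda>i. h i mod p) ` {..<p+1} \<subseteq> {..<p}" using p by auto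
  ultimately have "card {..<p+1} \<le> card {..<p}" by (metis card_image card_mono finite_lessThan)
  then show False by simp
qed

lemma mp_tw:
  assumes p: "2 \<le> p" and N: "1 \<le> N"
  shows "N \<le> treewidth (mp p N)"
proof (rule treewidth_ge_mindeg[OF mp_wf])
  have "0 < p * N" using p N by simp
  then show "verts (mp p N) \<noteq> {}" unfolding mp_verts by auto
  show "\<And>v. v \<in> verts (mp p N) \<Longrightarrow> N \<le> card {u. (v, u) \<in> edges (mp p N)}" by (rule mp_deg[OF p])
qed

lemma models_transfer_depth:
  assumes q1: "a - 1 \<le> a" and s: "sentence \<Phi>" and d: "qdepth \<Phi> \<le> a - 1" and N: "a - 1 \<le> N"
  shows "models (mp a N) \<Phi> \<longleftrightarrow> models (mp (a - 1) N) \<Phi>"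
proof -
  have fv: "free_vars \<Phi> = {}" using s unfolding sentence_def .
  have "\<And>s t. sat (mp a N) s \<Phi> \<longleftrightarrow> sat (mp (a - 1) N) t \<Phi>"
  proof -
    fix s t
    show "sat (mp a N) s \<Phi> \<longleftrightarrow> sat (mp (a - 1) N) t \<Phi>"
      by (rule ef_depth[OF q1 le_refl N]) (use fv d in \<open>auto simp: compat_def\<close>)
  qed
  then show ?thesis unfolding models_def by blast
qed

lemma models_transfer_width:
  assumes s: "sentence \<Phi>" and w: "var_width \<Phi> \<le> a - 1" and N: "a - 1 \<le> N" and a: "2 \<le> a - 1"
  shows "models (mp a N) \<Phi> \<longleftrightarrow> models (mp (a - 1) N) \<Phi>"
proof -
  have fv: "free_vars \<Phi> = {}" using s unfolding sentence_def .
  have N1: "1 \<le> N" using N a by simp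
  have pos: "0 < a * N" "0 < (a - 1) * N" using a N1 by auto
  have c0: "compat (\<lambda>_. 0) (\<lambda>_. 0) (all_vars \<Phi>) a (a - 1) N" unfolding compat_def using pos by auto
  have e: "sat (mp a N) (\<lambda>_. 0) \<Phi> \<longleftrightarrow> sat (mp (a - 1) N) (\<lambda>_. 0) \<Phi>"
    by (rule ef_width[OF _ le_refl N c0]) (use w in \<open>auto simp: var_width_def\<close>)
  have ind: "\<And>G s. sat G s \<Phi> \<longleftrightarrow> sat G (\<lambda>_. 0) \<Phi>" by (rule sat_agree) (use fv in auto)
  show ?thesis unfolding models_def using e ind by blast
qed

lemma D_lolli:
  assumes a: "3 \<le> a"
  shows "D_par treewidth (lollipop a b) = a"
proof -
  define \<Phi> where "\<Phi> = clr a 0"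
  obtain n where an: "a = Suc n" using a by (cases a) auto
  have sent: "sentence \<Phi>" unfolding \<Phi>_def an by (rule sentence_clr)
  have qd: "qdepth \<Phi> = a" unfolding \<Phi>_def by (rule qdepth_clr)
  have def: "defines_subgraph treewidth (lollipop a b) \<Phi>"
    unfolding defines_subgraph_def
  proof (intro conjI exI allI impI)
    show "sentence \<Phi>" by (rule sent)
    fix G assume G: "wf_graph G \<and> connected_graph G \<and> a + b + 1 \<le> treewidth G"
    show "models G \<Phi> \<longleftrightarrow> contains_subgraph G (lollipop a b)"
    proof
      assume "models G \<Phi>"
      then obtain g where g: "\<forall>i<a. g i \<in> verts G" "\<forall>i<a. \<forall>j<a. i \<noteq> j \<longrightarrow> (g i, g j) \<in> edges G"
      proof -
        have wfG: "wf_graph G" using G by blast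
        show ?thesis using \<open>models G \<Phi>\<close> unfolding \<Phi>_def models_clr[OF wfG] using that by blast
      qed
      show "contains_subgraph G (lollipop a b)"
      proof (rule ccontr)
        assume nc: "\<not> contains_subgraph G (lollipop a b)"
        have wfG: "wf_graph G" "connected_graph G" using G by blast+
        have a1: "1 \<le> a" using a by simp
        have gv: "\<And>i. i < a \<Longrightarrow> g i \<in> verts G" using g by blast
        have gE: "\<And>i j. i < a \<Longrightarrow> j < a \<Longrightarrow> i \<noteq> j \<Longrightarrow> (g i, g j) \<in> edges G" using g by blast
        have "treewidth G \<le> a + b" by (rule tw_lolli[OF wfG a1 gv gE nc])
        then show False using G by simp
      qed
    next
      assume "contains_subgraph G (lollipop a b)"
      then obtain h where h: "\<forall>i<a. h i \<in> verts G" "\<forall>i<a. \<forall>j<a. i \<noteq> j \<longrightarrow> (h i, h j) \<in> edges G"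
        using lolli_clique by blast
      have wfG: "wf_graph G" using G by blast
      show "models G \<Phi>" unfolding \<Phi>_def models_clr[OF wfG] using h by blast
    qed
  qed
  have le: "D_par treewidth (lollipop a b) \<le> a"
    unfolding D_par_def by (rule Least_le) (use def qd in blast)
  have ge: "a \<le> D_par treewidth (lollipop a b)"
  proof (rule ccontr)
    assume "\<not> a \<le> D_par treewidth (lollipop a b)"
    then have lt: "D_par treewidth (lollipop a b) < a" by simp
    obtain \<Psi> where \<Psi>: "defines_subgraph treewidth (lollipop a b) \<Psi>" "qdepth \<Psi> = D_par treewidth (lollipop a b)"
    proof -
      have ex: "\<exists>d. \<exists>\<Phi>. defines_subgraph treewidth (lollipop a b) \<Phi> \<and> qdepth \<Phi> = d" using def by blast
      have "\<exists>\<Phi>. defines_subgraph treewidth (lollipop a b) \<Phi> \<and> qdepth \<Phi> = D_par treewidth (lollipop a b)"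
        unfolding D_par_def by (rule LeastI_ex[OF ex])
      then show ?thesis using that by blast
    qed
    obtain k where k: "\<And>G. wf_graph G \<and> connected_graph G \<and> treewidth G \<ge> k \<longrightarrow> (models G \<Psi> \<longleftrightarrow> contains_subgraph G (lollipop a b))"
      and sP: "sentence \<Psi>" using \<Psi>(1) unfolding defines_subgraph_def by blast
    define N where "N = k + b + a"
    have N1: "1 \<le> N" "b + 1 \<le> N" "a - 1 \<le> N" "k \<le> N" using a unfolding N_def by auto
    have c1: "contains_subgraph (mp a N) (lollipop a b)" by (rule mp_contains) (use a N1 in auto)
    have c2: "\<not> contains_subgraph (mp (a - 1) N) (lollipop a b)"
      using mp_no_lolli[of "a - 1" N b] a by simp
    have g1: "wf_graph (mp a N) \<and> connected_graph (mp a N) \<and> treewidth (mp a N) \<ge> k"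
    proof (intro conjI)
      show "wf_graph (mp a N)" by (rule mp_wf)
      show "connected_graph (mp a N)" by (rule mp_conn) (use a N1 in auto)
      have "N \<le> treewidth (mp a N)" by (rule mp_tw) (use a N1 in auto)
      then show "treewidth (mp a N) \<ge> k" using N1 by linarith
    qed
    have g2: "wf_graph (mp (a - 1) N) \<and> connected_graph (mp (a - 1) N) \<and> treewidth (mp (a - 1) N) \<ge> k"
    proof (intro conjI)
      show "wf_graph (mp (a - 1) N)" by (rule mp_wf)
      show "connected_graph (mp (a - 1) N)" by (rule mp_conn) (use a N1 in auto)
      have "N \<le> treewidth (mp (a - 1) N)" by (rule mp_tw) (use a N1 in auto)
      then show "treewidth (mp (a - 1) N) \<ge> k" using N1 by linarith
    qed
    have m1: "models (mp a N) \<Psi>" using k[of "mp a N"] g1 c1 by blast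
    have m2: "\<not> models (mp (a - 1) N) \<Psi>" using k[of "mp (a - 1) N"] g2 c2 by blast
    have "models (mp a N) \<Psi> \<longleftrightarrow> models (mp (a - 1) N) \<Psi>"
      by (rule models_transfer_depth) (use sP \<Psi>(2) lt N1 in auto)
    then show False using m1 m2 by simp
  qed
  show ?thesis using le ge by simp
qed

lemma W_lolli:
  assumes a: "3 \<le> a"
  shows "W_par kappa (lollipop a b) = a"
proof -
  define \<Phi> where "\<Phi> = clr a 0"
  obtain n where an: "a = Suc n" using a by (cases a) auto
  have sent: "sentence \<Phi>" unfolding \<Phi>_def an by (rule sentence_clr)
  have vw: "var_width \<Phi> \<le> a" unfolding \<Phi>_def by (rule width_clr) (use a in simp)
  have def: "defines_subgraph kappa (lollipop a b) \<Phi>"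
    unfolding defines_subgraph_def
  proof (intro conjI exI allI impI)
    show "sentence \<Phi>" by (rule sent)
    fix G assume G: "wf_graph G \<and> connected_graph G \<and> a + b \<le> kappa G"
    show "models G \<Phi> \<longleftrightarrow> contains_subgraph G (lollipop a b)"
    proof
      assume "models G \<Phi>"
      then obtain g where g: "\<forall>i<a. g i \<in> verts G" "\<forall>i<a. \<forall>j<a. i \<noteq> j \<longrightarrow> (g i, g j) \<in> edges G"
      proof -
        have wfG: "wf_graph G" using G by blast
        show ?thesis using \<open>models G \<Phi>\<close> unfolding \<Phi>_def models_clr[OF wfG] using that by blast
      qed
      show "contains_subgraph G (lollipop a b)"
      proof -
        have wfG: "wf_graph G" "connected_graph G" using G by blast+
        have a1: "1 \<le> a" using a by simp
        have kk: "a + b \<le> kappa G" using G by blast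
        have gv: "\<And>i. i < a \<Longrightarrow> g i \<in> verts G" using g by blast
        have gE: "\<And>i j. i < a \<Longrightarrow> j < a \<Longrightarrow> i \<noteq> j \<Longrightarrow> (g i, g j) \<in> edges G" using g by blast
        show ?thesis by (rule kappa_lolli[OF wfG a1 kk gv gE])
      qed
    next
      assume "contains_subgraph G (lollipop a b)"
      then obtain h where h: "\<forall>i<a. h i \<in> verts G" "\<forall>i<a. \<forall>j<a. i \<noteq> j \<longrightarrow> (h i, h j) \<in> edges G"
        using lolli_clique by blast
      have wfG: "wf_graph G" using G by blast
      show "models G \<Phi>" unfolding \<Phi>_def models_clr[OF wfG] using h by blast
    qed
  qed
  have le: "W_par kappa (lollipop a b) \<le> a"
  proof -
    have "W_par kappa (lollipop a b) \<le> var_width \<Phi>"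
      unfolding W_par_def by (rule Least_le) (use def in blast)
    then show ?thesis using vw by simp
  qed
  have ge: "a \<le> W_par kappa (lollipop a b)"
  proof (rule ccontr)
    assume "\<not> a \<le> W_par kappa (lollipop a b)"
    then have lt: "W_par kappa (lollipop a b) < a" by simp
    obtain \<Psi> where \<Psi>: "defines_subgraph kappa (lollipop a b) \<Psi>" "var_width \<Psi> = W_par kappa (lollipop a b)"
    proof -
      have ex: "\<exists>d. \<exists>\<Phi>. defines_subgraph kappa (lollipop a b) \<Phi> \<and> var_width \<Phi> = d" using def by blast
      have "\<exists>\<Phi>. defines_subgraph kappa (lollipop a b) \<Phi> \<and> var_width \<Phi> = W_par kappa (lollipop a b)"
        unfolding W_par_def by (rule LeastI_ex[OF ex])
      then show ?thesis using that by blast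
    qed
    obtain k where k: "\<And>G. wf_graph G \<and> connected_graph G \<and> kappa G \<ge> k \<longrightarrow> (models G \<Psi> \<longleftrightarrow> contains_subgraph G (lollipop a b))"
      and sP: "sentence \<Psi>" using \<Psi>(1) unfolding defines_subgraph_def by blast
    define N where "N = k + b + a"
    have N1: "1 \<le> N" "b + 1 \<le> N" "a - 1 \<le> N" "k < N" using a unfolding N_def by auto
    have ka: "k \<le> kappa (mp a N)" using kappa_ge[OF mp_wf mp_kconn[of a k N]] a N1 by simp
    have ka2: "k \<le> kappa (mp (a - 1) N)" using kappa_ge[OF mp_wf mp_kconn[of "a - 1" k N]] a N1 by simp
    have c1: "contains_subgraph (mp a N) (lollipop a b)" by (rule mp_contains) (use a N1 in auto)
    have c2: "\<not> contains_subgraph (mp (a - 1) N) (lollipop a b)"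
      using mp_no_lolli[of "a - 1" N b] a by simp
    have g1: "wf_graph (mp a N) \<and> connected_graph (mp a N) \<and> kappa (mp a N) \<ge> k"
    proof (intro conjI)
      show "wf_graph (mp a N)" by (rule mp_wf)
      show "connected_graph (mp a N)" by (rule mp_conn) (use a N1 in auto)
      show "kappa (mp a N) \<ge> k" by (rule ka)
    qed
    have g2: "wf_graph (mp (a - 1) N) \<and> connected_graph (mp (a - 1) N) \<and> kappa (mp (a - 1) N) \<ge> k"
    proof (intro conjI)
      show "wf_graph (mp (a - 1) N)" by (rule mp_wf)
      show "connected_graph (mp (a - 1) N)" by (rule mp_conn) (use a N1 in auto)
      show "kappa (mp (a - 1) N) \<ge> k" by (rule ka2)
    qed
    have m1: "models (mp a N) \<Psi>" using k[of "mp a N"] g1 c1 by blast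
    have m2: "\<not> models (mp (a - 1) N) \<Psi>" using k[of "mp (a - 1) N"] g2 c2 by blast
    have "models (mp a N) \<Psi> \<longleftrightarrow> models (mp (a - 1) N) \<Psi>"
      by (rule models_transfer_width) (use sP \<Psi>(2) lt N1 a in auto)
    then show False using m1 m2 by simp
  qed
  show ?thesis using le ge by simp
qed

theorem theorem6:
  shows "(\<forall>a l :: nat. 3 \<le> a \<and> a \<le> l \<longrightarrow>
            (\<exists>F. wf_graph F \<and> connected_graph F \<and> card (verts F) = l \<and>
                 treewidth F = a - 1 \<and> D_par treewidth F \<le> a))
       \<and> (\<forall>a b :: nat. 3 \<le> a \<longrightarrow>
            D_par treewidth (lollipop a b) = a \<and> W_par kappa (lollipop a b) = a)"
proof -
  have P1: "\<forall>a l :: nat. 3 \<le> a \<and> a \<le> l \<longrightarrow>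
            (\<exists>F. wf_graph F \<and> connected_graph F \<and> card (verts F) = l \<and>
                 treewidth F = a - 1 \<and> D_par treewidth F \<le> a)"
  proof (intro allI impI)
    fix a l :: nat assume al: "3 \<le> a \<and> a \<le> l"
    have f1: "wf_graph (lollipop a (l - a))" by (rule lolli_wf)
    have f2: "connected_graph (lollipop a (l - a))" by (rule lolli_conn) (use al in simp)
    have f3: "card (verts (lollipop a (l - a))) = l" using lolli_card al by simp
    have f4: "treewidth (lollipop a (l - a)) = a - 1" by (rule lolli_tw) (use al in simp)
    have f5: "D_par treewidth (lollipop a (l - a)) \<le> a" using D_lolli al by simp
    show "\<exists>F. wf_graph F \<and> connected_graph F \<and> card (verts F) = l \<and> treewidth F = a - 1 \<and> D_par treewidth F \<le> a"
      using f1 f2 f3 f4 f5 by blast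
  qed
  have P2: "\<forall>a b :: nat. 3 \<le> a \<longrightarrow> D_par treewidth (lollipop a b) = a \<and> W_par kappa (lollipop a b) = a"
    using D_lolli W_lolli by blast
  show ?thesis using P1 P2 by blast
qed


end
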